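(* Let $n\ge3$, $p\in\mathcal{P}_n$, and let $g_n\in\mathcal{P}_n$ be (an arc length parametrisation of) the regular planar $n$-gon of length $1$. Then $\Delta_n[g_n]^{-1}\le\Delta_n[p]^{-1}$, with equality if and only if $p$ is a regular $n$-gon.
   Context: $\mathbb{S}_1=\mathbb{R}/\mathbb{Z}$. $\mathcal{P}_n$ is the set of arc length parametrisations $p:\mathbb{S}_1\to\mathbb{R}^d$ of closed equilateral polygons with $n$ edges of total length $1$; consecutive vertices $x_1,\dots,x_n$, $x_0=x_n$, $x_{n+1}=x_1$. For consecutive vertices $x,y,z$ with exterior angle $\phi=\measuredangle(y-x,z-y)\in[0,\pi]$, $\kappa_d(x,y,z)=\frac{2\tan(\phi/2)}{(|x-y|+|z-y|)/2}$; $\mathrm{maxCurv}(p)=\max_i\kappa_d(x_{i-1},x_i,x_{i+1})$, $\mathrm{minRad}(p)=1/\mathrm{maxCurv}(p)$. $\mathrm{dcrit}(p)$ is the set of pairs of distinct points $x=p(t)$, $y=p(s)$ with $s$ a local extremum of $u\mapsto|p(t)-p(u)|^2$ and $t$ a local extremum of $v\mapsto|p(v)-p(s)|^2$; $\mathrm{dcsd}(p)=\min_{(x,y)\in\mathrm{dcrit}(p)}|x-y|$. $\Delta_n[p]=\min\{\mathrm{minRad}(p),\tfrac12\mathrm{dcsd}(p)\}$ if all vertices are pairwise distinct, $\Delta_n[p]=0$ otherwise; $\Delta_n[p]^{-1}=1/\Delta_n[p]$ (with $1/0=\infty$). *)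

theory Defs
  imports "HOL-Analysis.Analysis" "HOL-Library.Extended_Real"
begin

text \<open>Curves on S_1 = R/Z are represented as 1-periodic functions real => 'a.
  An element of P_n: closed equilateral polygon with n edges of total length 1,
  parametrised by arc length: there is a parameter shift t0 such that the vertices
  are p(t0 + k/n), consecutive vertices have distance 1/n and p is affine (hence
  unit speed) on each edge.\<close>

definition periodic1 :: "(real \<Rightarrow> 'a) \<Rightarrow> bool" where
  "periodic1 p \<longleftrightarrow> (\<forall>t. p (t + 1) = p t)"

definition poly_shift :: "nat \<Rightarrow> (real \<Rightarrow> 'a::real_normed_vector) \<Rightarrow> real \<Rightarrow> bool" where
  "poly_shift n p t0 \<longleftrightarrow>
     (\<forall>k::int. norm (p (t0 + (of_int k + 1) / real n) - p (t0 + of_int k / real n)) = 1 / real n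
        \<and> (\<forall>s\<in>{0..1}. p (t0 + (of_int k + s) / real n) =
              (1 - s) *\<^sub>R p (t0 + of_int k / real n) + s *\<^sub>R p (t0 + (of_int k + 1) / real n)))"

definition Pn :: "nat \<Rightarrow> (real \<Rightarrow> 'a::real_normed_vector) set" where
  "Pn n = {p. periodic1 p \<and> (\<exists>t0. poly_shift n p t0)}"

text \<open>Vertex x_k (k :: int, indices mod n) of p \<in> P_n, for a chosen admissible shift.\<close>
definition vert :: "nat \<Rightarrow> (real \<Rightarrow> 'a::real_normed_vector) \<Rightarrow> int \<Rightarrow> 'a" where
  "vert n p k = p ((SOME t0. poly_shift n p t0) + of_int k / real n)"

definition vec_angle :: "'a::real_inner \<Rightarrow> 'a \<Rightarrow> real" where
  "vec_angle u v = arccos ((u \<bullet> v) / (norm u * norm v))"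

text \<open>Discrete curvature kappa_d(x,y,z); value infinity when the exterior angle is pi
  (tan(pi/2) = infinity).\<close>
definition kappa_d :: "'a::real_inner \<Rightarrow> 'a \<Rightarrow> 'a \<Rightarrow> ereal" where
  "kappa_d x y z = (let \<phi> = vec_angle (y - x) (z - y) in
     if \<phi> = pi then \<infinity>
     else ereal (2 * tan (\<phi> / 2) / ((norm (x - y) + norm (z - y)) / 2)))"

definition maxCurv :: "nat \<Rightarrow> (real \<Rightarrow> 'a::real_inner) \<Rightarrow> ereal" where
  "maxCurv n p = Max ((\<lambda>i. kappa_d (vert n p (i - 1)) (vert n p i) (vert n p (i + 1))) ` {1..int n})"

definition minRad :: "nat \<Rightarrow> (real \<Rightarrow> 'a::real_inner) \<Rightarrow> ereal" where
  "minRad n p = inverse (maxCurv n p)"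

definition local_extremum :: "(real \<Rightarrow> real) \<Rightarrow> real \<Rightarrow> bool" where
  "local_extremum f s \<longleftrightarrow>
     (\<exists>e>0. \<forall>u. \<bar>u - s\<bar> < e \<longrightarrow> f u \<le> f s) \<or> (\<exists>e>0. \<forall>u. \<bar>u - s\<bar> < e \<longrightarrow> f s \<le> f u)"

definition dcrit :: "(real \<Rightarrow> 'a::real_normed_vector) \<Rightarrow> ('a \<times> 'a) set" where
  "dcrit p = {(p t, p s) | t s. p t \<noteq> p s
      \<and> local_extremum (\<lambda>u. (norm (p t - p u))\<^sup>2) s
      \<and> local_extremum (\<lambda>v. (norm (p v - p s))\<^sup>2) t}"

definition dcsd :: "(real \<Rightarrow> 'a::real_normed_vector) \<Rightarrow> ereal" where
  "dcsd p = (INF xy\<in>dcrit p. ereal (norm (fst xy - snd xy)))"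

definition Delta :: "nat \<Rightarrow> (real \<Rightarrow> 'a::real_inner) \<Rightarrow> ereal" where
  "Delta n p = (if inj_on (vert n p) {1..int n} then min (minRad n p) (dcsd p / 2) else 0)"

text \<open>Delta_n[p]^{-1}, with 1/0 = infinity.\<close>
definition Delta_inv :: "nat \<Rightarrow> (real \<Rightarrow> 'a::real_inner) \<Rightarrow> ereal" where
  "Delta_inv n p = inverse (Delta n p)"

definition regular_ngon :: "nat \<Rightarrow> (real \<Rightarrow> 'a::real_inner) \<Rightarrow> bool" where
  "regular_ngon n p \<longleftrightarrow> p \<in> Pn n \<and>
     (\<exists>t0 c e1 e2. poly_shift n p t0 \<and> norm e1 = 1 \<and> norm e2 = 1 \<and> e1 \<bullet> e2 = 0 \<and>
        (\<forall>k::int. p (t0 + of_int k / real n) =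
           c + (1 / (2 * real n * sin (pi / real n))) *\<^sub>R
               (cos (2 * pi * of_int k / real n) *\<^sub>R e1 + sin (2 * pi * of_int k / real n) *\<^sub>R e2)))"

end

theory Submission
  imports Defs
begin


lemma inner_unit_abs_le:
  fixes u v :: "'a::real_inner"
  assumes "norm u = 1" "norm v = 1"
  shows "\<bar>u \<bullet> v\<bar> \<le> 1"
  using Cauchy_Schwarz_ineq2[of u v] assms by simp

lemma sph_tri:
  fixes u v w :: "'a::real_inner"
  assumes u: "norm u = 1" and v: "norm v = 1" and w: "norm w = 1"
  shows "arccos (u \<bullet> w) \<le> arccos (u \<bullet> v) + arccos (v \<bullet> w)"
proof -
  define a where "a = u \<bullet> v"
  define b where "b = v \<bullet> w"
  have a1: "\<bar>a\<bar> \<le> 1" unfolding a_def by (rule inner_unit_abs_le[OF u v])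
  have b1: "\<bar>b\<bar> \<le> 1" unfolding b_def by (rule inner_unit_abs_le[OF v w])
  have uw1: "\<bar>u \<bullet> w\<bar> \<le> 1" by (rule inner_unit_abs_le[OF u w])
  define p where "p = u - a *\<^sub>R v"
  define q where "q = w - b *\<^sub>R v"
  have vv: "v \<bullet> v = 1" using v by (simp add: dot_square_norm)
  have uu: "u \<bullet> u = 1" using u by (simp add: dot_square_norm)
  have ww: "w \<bullet> w = 1" using w by (simp add: dot_square_norm)
  have pq: "p \<bullet> q = u \<bullet> w - a * b"
    unfolding p_def q_def by (simp add: inner_diff_left inner_diff_right vv a_def b_def inner_commute)
  have pp: "norm p ^ 2 = 1 - a^2"
    unfolding p_def power2_norm_eq_inner by (simp add: inner_diff_left inner_diff_right vv uu a_def inner_commute power2_eq_square)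
  have qq: "norm q ^ 2 = 1 - b^2"
    unfolding q_def power2_norm_eq_inner by (simp add: inner_diff_left inner_diff_right vv ww b_def inner_commute power2_eq_square)
  have np: "norm p = sqrt (1 - a^2)" using pp by (metis norm_ge_zero real_sqrt_unique)
  have nq: "norm q = sqrt (1 - b^2)" using qq by (metis norm_ge_zero real_sqrt_unique)
  have key: "u \<bullet> w \<ge> a * b - sqrt (1 - a^2) * sqrt (1 - b^2)"
  proof -
    have "- (norm p * norm q) \<le> p \<bullet> q" using Cauchy_Schwarz_ineq2[of p q] by (simp add: abs_le_iff)
    then show ?thesis using pq np nq by simp
  qed
  define A where "A = arccos a"
  define B where "B = arccos b"
  have A0: "0 \<le> A" "A \<le> pi" unfolding A_def using a1 by (auto intro: arccos_lbound arccos_ubound)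
  have B0: "0 \<le> B" "B \<le> pi" unfolding B_def using b1 by (auto intro: arccos_lbound arccos_ubound)
  have cAB: "cos (A + B) = a * b - sqrt (1 - a^2) * sqrt (1 - b^2)"
    unfolding A_def B_def cos_add using a1 b1 by (simp add: sin_arccos_abs)
  show ?thesis
  proof (cases "A + B \<le> pi")
    case False
    have "arccos (u \<bullet> w) \<le> pi" using arccos_ubound[of "u \<bullet> w"] uw1 by (simp add: abs_le_iff)
    then show ?thesis using False A_def B_def a_def b_def by auto
  next
    case True
    have "cos (A + B) \<le> cos (arccos (u \<bullet> w))" using key cAB uw1 by simp
    then have "arccos (u \<bullet> w) \<le> A + B"
      using cos_mono_le_eq[of "A+B" "arccos (u \<bullet> w)"] True A0 B0 uw1
        arccos_lbound[of "u \<bullet> w"] arccos_ubound[of "u \<bullet> w"] by auto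
    then show ?thesis by (simp add: A_def B_def a_def b_def)
  qed
qed


lemma periodic_int_mult:
  fixes U :: "int \<Rightarrow> 'b"
  assumes per: "\<And>k. U (k + int n) = U k"
  shows "U (k + j * int n) = U k"
proof (induction j rule: int_induct[where k=0])
  case base then show ?case by simp
next
  case (step1 i) then show ?case using per[of "k + i * int n"] by (simp add: algebra_simps)
next
  case (step2 i) then show ?case using per[of "k + (i - 1) * int n"] by (simp add: algebra_simps)
qed

lemma periodic_mod:
  fixes U :: "int \<Rightarrow> 'b"
  assumes per: "\<And>k. U (k + int n) = U k"
  shows "U k = U (k mod int n)"
  using periodic_int_mult[of U n, OF per, of "k mod int n" "k div int n"]
  by (metis mult.commute mod_div_mult_eq)

lemma periodic_sum_shift:
  fixes f :: "int \<Rightarrow> 'b::ab_group_add"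
  assumes per: "\<And>k. f (k + int n) = f k"
  shows "(\<Sum>k<n. f (int i + int k)) = (\<Sum>k<n. f (int k))"
proof (induction i)
  case 0 then show ?case by simp
next
  case (Suc i)
  have "(\<Sum>k<Suc n. f (int i + int k)) = (\<Sum>k<n. f (int i + int k)) + f (int i + int n)"
    by simp
  moreover have "(\<Sum>k<Suc n. f (int i + int k)) = f (int i) + (\<Sum>k<n. f (int (Suc i) + int k))"
    by (subst sum.lessThan_Suc_shift) (simp add: algebra_simps)
  ultimately have "(\<Sum>k<n. f (int (Suc i) + int k)) = (\<Sum>k<n. f (int i + int k))"
    using per[of "int i"] by (simp add: algebra_simps)
  then show ?case using Suc by simp
qed

lemma sum_cos_roots:
  assumes n: "n \<ge> 2"
  shows "(\<Sum>k<n. cos (2 * pi * real k / real n)) = 0"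
proof -
  define h where "h = pi / real n"
  have hpos: "0 < h" "h < pi" using n by (auto simp: h_def field_simps)
  have sh: "sin h \<noteq> 0" using sin_gt_zero[OF hpos] by simp
  have tel: "2 * sin h * cos (2 * pi * real k / real n) = sin ((2 * real k + 1) * h) - sin ((2 * real k - 1) * h)" for k
  proof -
    have e: "2 * pi * real k / real n = 2 * real k * h" using n by (simp add: h_def)
    have "sin ((2 * real k + 1) * h) = sin (2 * real k * h + h)" by (simp add: algebra_simps)
    moreover have "sin ((2 * real k - 1) * h) = sin (2 * real k * h - h)" by (simp add: algebra_simps)
    ultimately show ?thesis unfolding e by (simp add: sin_add sin_diff)
  qed
  have "2 * sin h * (\<Sum>k<n. cos (2 * pi * real k / real n)) =
      (\<Sum>k<n. 2 * sin h * cos (2 * pi * real k / real n))"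
    by (simp add: sum_distrib_left)
  also have "\<dots> = (\<Sum>k<n. sin ((2 * real (Suc k) - 1) * h) - sin ((2 * real k - 1) * h))"
  proof (rule sum.cong)
    fix k assume "k \<in> {..<n}"
    have "(2 * real (Suc k) - 1) = 2 * real k + 1" by simp
    then show "2 * sin h * cos (2 * pi * real k / real n) = sin ((2 * real (Suc k) - 1) * h) - sin ((2 * real k - 1) * h)"
      using tel[of k] by (simp add: add.commute)
  qed simp
  also have "\<dots> = sin ((2 * real n - 1) * h) - sin ((2 * real 0 - 1) * h)"
    by (rule sum_lessThan_telescope)
  also have "\<dots> = 0"
  proof -
    have "(2 * real n - 1) * h = 2 * pi - h" using n by (simp add: h_def algebra_simps)
    then show ?thesis by simp
  qed
  finally show ?thesis using sh by simp
qed


lemma gram_regular: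
  fixes U :: "int \<Rightarrow> 'a::real_inner"
  assumes n: "n \<ge> 3"
    and per: "\<And>k. U (k + int n) = U k"
    and unit: "\<And>k. norm (U k) = 1"
    and closed: "(\<Sum>k<n. U (int k)) = 0"
    and ang: "\<And>k. arccos (U k \<bullet> U (k + 1)) \<le> 2 * pi / real n"
  shows "U i \<bullet> U (i + k) = cos (2 * pi * real_of_int k / real n)"
proof -
  define \<theta> where "\<theta> = 2 * pi / real n"
  have th0: "0 < \<theta>" using n by (simp add: \<theta>_def)
  have L1: "arccos (U i \<bullet> U (i + int m)) \<le> real m * \<theta>" for i m
  proof (induction m)
    case 0
    have "U i \<bullet> U i = 1" using unit[of i] by (simp add: dot_square_norm)
    then show ?case by simp
  next
    case (Suc m)
    have "arccos (U i \<bullet> U (i + int (Suc m))) \<le> arccos (U i \<bullet> U (i + int m)) + arccos (U (i + int m) \<bullet> U (i + int m + 1))"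
      using sph_tri[OF unit[of i] unit[of "i + int m"] unit[of "i + int m + 1"]] by (simp add: algebra_simps)
    also have "\<dots> \<le> real m * \<theta> + \<theta>" using Suc ang[of "i + int m"] by (simp add: \<theta>_def)
    finally show ?case by (simp add: algebra_simps)
  qed
  have uabs: "\<bar>U a \<bullet> U b\<bar> \<le> 1" for a b by (rule inner_unit_abs_le[OF unit unit])
  have cosge: "U a \<bullet> U b \<ge> cos x" if "arccos (U a \<bullet> U b) \<le> x" "x \<le> pi" for a b x
  proof -
    have "0 \<le> arccos (U a \<bullet> U b)" "arccos (U a \<bullet> U b) \<le> pi"
      using uabs[of a b] by (auto intro!: arccos_lbound arccos_ubound simp: abs_le_iff)
    then have "cos x \<le> cos (arccos (U a \<bullet> U b))"
      using that cos_mono_le_eq[of x "arccos (U a \<bullet> U b)"] by auto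
    then show ?thesis using uabs[of a b] by (simp add: abs_le_iff)
  qed
  have L2: "U i \<bullet> U (i + int k) \<ge> cos (real k * \<theta>)" if "k < n" for i k
  proof (cases "2 * k \<le> n")
    case True
    have "real k * \<theta> \<le> pi" using True n by (simp add: \<theta>_def field_simps)
    then show ?thesis using cosge L1 by blast
  next
    case False
    define m where "m = n - k"
    have "real m * \<theta> \<le> pi" using False that n by (simp add: \<theta>_def field_simps m_def of_nat_diff)
    then have "U (i + int k) \<bullet> U (i + int k + int m) \<ge> cos (real m * \<theta>)" using cosge L1 by blast
    moreover have "U (i + int k + int m) = U i" using per[of i] that by (simp add: m_def of_nat_diff)
    moreover have "cos (real m * \<theta>) = cos (real k * \<theta>)"
    proof -
      have "real m * \<theta> = 2 * pi - real k * \<theta>" using that n by (simp add: m_def of_nat_diff \<theta>_def field_simps)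
      then show ?thesis by simp
    qed
    ultimately show ?thesis by (simp add: inner_commute)
  qed
  define F where "F i k = U (int i) \<bullet> U (int i + int k) - cos (real k * \<theta>)" for i k
  have Fnn: "F i k \<ge> 0" if "k < n" for i k using L2[OF that] by (simp add: F_def)
  have sumcos: "(\<Sum>k<n. cos (real k * \<theta>)) = 0"
    using sum_cos_roots[of n] n by (simp add: \<theta>_def mult.commute)
  have inner_sum: "(\<Sum>k<n. U (int i) \<bullet> U (int i + int k)) = U (int i) \<bullet> (\<Sum>k<n. U (int k))" for i
  proof -
    have "(\<Sum>k<n. U (int i) \<bullet> U (int i + int k)) = U (int i) \<bullet> (\<Sum>k<n. U (int i + int k))"
      by (simp add: inner_sum_right)
    also have "(\<Sum>k<n. U (int i + int k)) = (\<Sum>k<n. U (int k))"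
      by (rule periodic_sum_shift[of U n, OF per])
    finally show ?thesis .
  qed
  have sumF: "(\<Sum>i<n. \<Sum>k<n. F i k) = 0"
    unfolding F_def sum_subtractf using inner_sum closed sumcos by simp
  have Finner: "(\<Sum>k<n. F i k) = 0" if "i < n" for i
  proof -
    have "\<forall>i\<in>{..<n}. (\<Sum>k<n. F i k) = 0"
      using sumF by (subst sum_nonneg_eq_0_iff[symmetric]) (auto intro!: sum_nonneg Fnn)
    then show ?thesis using that by auto
  qed
  have F0: "F i k = 0" if "i < n" "k < n" for i k
    using Finner[OF that(1)] sum_nonneg_eq_0_iff[of "{..<n}" "F i"] Fnn that(2) by auto
  have cosper: "cos (real_of_int a * \<theta>) = cos (real_of_int (a mod int n) * \<theta>)" for a
  proof -
    have "real_of_int a * \<theta> = real_of_int (a mod int n) * \<theta> + (2 * pi) * real_of_int (a div int n)"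
    proof -
      have "real_of_int a = real_of_int (a mod int n) + real_of_int (a div int n) * real n"
        by (metis mod_div_mult_eq of_int_add of_int_mult of_int_of_nat_eq add.commute)
      then show ?thesis using n by (simp add: \<theta>_def field_simps)
    qed
    then show ?thesis by (simp add: cos_add)
  qed
  define i' where "i' = nat (i mod int n)"
  define k' where "k' = nat (k mod int n)"
  have i'n: "i' < n" "int i' = i mod int n" using n unfolding i'_def by (auto simp: nat_less_iff)
  have k'n: "k' < n" "int k' = k mod int n" using n unfolding k'_def by (auto simp: nat_less_iff)
  have "U i = U (int i')" using periodic_mod[of U n, OF per, of i] i'n by simp
  moreover have "U (i + k) = U (int i' + int k')"
    using periodic_mod[of U n, OF per, of "i + k"] periodic_mod[of U n, OF per, of "int i' + int k'"] i'n k'n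
    by (simp add: mod_add_eq)
  moreover have "cos (2 * pi * real_of_int k / real n) = cos (real k' * \<theta>)"
  proof -
    have "real k' = real_of_int (k mod int n)" using k'n(2) by (metis of_int_of_nat_eq)
    then show ?thesis using cosper[of k] by (simp add: \<theta>_def mult.commute)
  qed
  ultimately show ?thesis using F0[OF i'n(1) k'n(1)] by (simp add: F_def)
qed


lemma recon:
  fixes U :: "int \<Rightarrow> 'a::real_inner"
  assumes n: "n \<ge> 3"
    and G: "\<And>i k. U i \<bullet> U (i + k) = cos (2 * pi * real_of_int k / real n)"
  shows "\<exists>a b. norm a = 1 \<and> norm b = 1 \<and> a \<bullet> b = 0 \<and>
     (\<forall>k. U k = cos (2 * pi * real_of_int k / real n) *\<^sub>R a + sin (2 * pi * real_of_int k / real n) *\<^sub>R b)"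
proof -
  define \<theta> where "\<theta> = 2 * pi / real n"
  have th: "0 < \<theta>" "\<theta> < pi" using n by (auto simp: \<theta>_def field_simps)
  define c where "c = cos \<theta>"
  define s where "s = sin \<theta>"
  have s0: "s > 0" using sin_gt_zero[OF th] by (simp add: s_def)
  have cs: "c^2 + s^2 = 1" by (simp add: c_def s_def)
  have Gij: "U i \<bullet> U j = cos (real_of_int (j - i) * \<theta>)" for i j
    using G[of i "j - i"] by (simp add: \<theta>_def mult.commute)
  define a where "a = U 0"
  define b where "b = (1 / s) *\<^sub>R (U 1 - c *\<^sub>R U 0)"
  have G00: "U 0 \<bullet> U 0 = 1" using Gij[of 0 0] by simp
  have G01: "U 0 \<bullet> U 1 = c" using Gij[of 0 1] by (simp add: c_def)
  have G11: "U 1 \<bullet> U 1 = 1" using Gij[of 1 1] by simp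
  have G10: "U 1 \<bullet> U 0 = c" using G01 by (simp add: inner_commute)
  have aa: "a \<bullet> a = 1" by (simp add: a_def G00)
  have ab: "a \<bullet> b = 0" by (simp add: a_def b_def inner_diff_right G00 G01)
  have bb: "b \<bullet> b = 1"
  proof -
    have "b \<bullet> b = (1 - c^2) / s^2"
      using s0 by (simp add: b_def inner_diff_right inner_diff_left G00 G01 G10 G11 power2_eq_square field_simps)
    then show ?thesis using cs s0 by simp
  qed
  have main: "U k = cos (real_of_int k * \<theta>) *\<^sub>R a + sin (real_of_int k * \<theta>) *\<^sub>R b" for k
  proof -
    define C where "C = cos (real_of_int k * \<theta>)"
    define S where "S = sin (real_of_int k * \<theta>)"
    have CS: "C^2 + S^2 = 1" by (simp add: C_def S_def)
    have Gk0: "U k \<bullet> U 0 = C" using Gij[of k 0] by (simp add: C_def)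
    have G0k: "U 0 \<bullet> U k = C" using Gij[of 0 k] by (simp add: C_def)
    have Gk1: "U k \<bullet> U 1 = C * c + S * s"
    proof -
      have "U k \<bullet> U 1 = cos (real_of_int k * \<theta> - \<theta>)" using Gij[of k 1] by (metis cos_minus minus_diff_eq of_int_1 of_int_diff left_diff_distrib mult_1 mult.commute)
      then show ?thesis by (simp add: cos_diff C_def S_def c_def s_def)
    qed
    have G1k: "U 1 \<bullet> U k = C * c + S * s" using Gk1 by (simp add: inner_commute)
    have Gkk: "U k \<bullet> U k = 1" using Gij[of k k] by simp
    define z where "z = U k - (C *\<^sub>R a + S *\<^sub>R b)"
    have "z \<bullet> z = 1 - 2 * (C * C + S * S) + (C * C + S * S)"
    proof -
      have "z \<bullet> z = U k \<bullet> U k - 2 * (C * (U k \<bullet> a) + S * (U k \<bullet> b)) + (C * C * (a \<bullet> a) + 2 * C * S * (a \<bullet> b) + S * S * (b \<bullet> b))"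
        by (simp add: z_def inner_diff_left inner_diff_right inner_add_left inner_add_right inner_commute algebra_simps)
      moreover have "U k \<bullet> a = C" by (simp add: a_def Gk0)
      moreover have "U k \<bullet> b = S"
        using s0 by (simp add: b_def inner_diff_right Gk1 Gk0 field_simps)
      ultimately show ?thesis using aa ab bb Gkk by simp
    qed
    then have "z \<bullet> z = 0" using CS by (simp add: power2_eq_square)
    then have "z = 0" by simp
    then show ?thesis by (simp add: z_def C_def S_def)
  qed
  show ?thesis
    apply (rule exI[of _ a], rule exI[of _ b])
    using aa ab bb main by (simp add: norm_eq_1 \<theta>_def mult.commute)
qed


lemma trig_a: fixes x h :: real shows "-(cos (x + 2*h) - cos x) * sin h + (sin (x + 2*h) - sin x) * cos h = 2 * sin h * cos x"
proof -
  have e: "sin h * sin h + cos h * cos h = 1" using sin_cos_squared_add[of h] unfolding power2_eq_square by linarith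
  show ?thesis unfolding cos_add sin_add cos_double sin_double power2_eq_square using e by algebra
qed
lemma trig_b: fixes x h :: real shows "-(cos (x + 2*h) - cos x) * cos h - (sin (x + 2*h) - sin x) * sin h = 2 * sin h * sin x"
proof -
  have e: "sin h * sin h + cos h * cos h = 1" using sin_cos_squared_add[of h] unfolding power2_eq_square by linarith
  show ?thesis unfolding cos_add sin_add cos_double sin_double power2_eq_square using e by algebra
qed

lemma Pn_shift:
  assumes "p \<in> Pn n"
  shows "poly_shift n p (SOME t. poly_shift n p t)"
  using assms unfolding Pn_def by (auto intro: someI_ex)

lemma vert_step:
  assumes "p \<in> Pn n"
  shows "norm (vert n p (k + 1) - vert n p k) = 1 / real n"
proof -
  let ?t = "SOME t. poly_shift n p t"
  have "norm (p (?t + (of_int k + 1) / real n) - p (?t + of_int k / real n)) = 1 / real n"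
    using Pn_shift[OF assms] unfolding poly_shift_def by blast
  moreover have "real_of_int (k + 1) = of_int k + 1" by simp
  ultimately show ?thesis unfolding vert_def by metis
qed

lemma vert_per:
  assumes "p \<in> Pn n" "n > 0"
  shows "vert n p (k + int n) = vert n p k"
proof -
  have per: "periodic1 p" using assms unfolding Pn_def by auto
  let ?t = "SOME t. poly_shift n p t"
  have "?t + real_of_int (k + int n) / real n = (?t + real_of_int k / real n) + 1"
    using assms(2) by (simp add: field_simps)
  moreover have "p ((?t + real_of_int k / real n) + 1) = p (?t + real_of_int k / real n)"
    using per unfolding periodic1_def by blast
  ultimately show ?thesis unfolding vert_def by metis
qed


lemma vec_angle_scale:
  fixes a b :: "'a::real_inner"
  assumes "norm a = 1" "norm b = 1" "c > 0"
  shows "vec_angle (c *\<^sub>R a) (c *\<^sub>R b) = arccos (a \<bullet> b)"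
  using assms unfolding vec_angle_def by (simp add: power2_eq_square)

lemma kappa_char:
  fixes x y z :: "'a::real_inner"
  assumes n: "n > 0" and "norm (y - x) = 1 / real n" "norm (z - y) = 1 / real n"
  shows "kappa_d x y z = (let \<phi> = vec_angle (y - x) (z - y) in
     if \<phi> = pi then \<infinity> else ereal (2 * real n * tan (\<phi> / 2)))"
proof -
  have "norm (x - y) = 1 / real n" using assms(2) by (simp add: norm_minus_commute)
  then have e: "(norm (x - y) + norm (z - y)) / 2 = 1 / real n" using assms(3) by simp
  show ?thesis unfolding kappa_d_def Let_def e using n by simp
qed

lemma kappa_cmp:
  assumes n: "n \<ge> 3" and phi: "0 \<le> \<phi>" "\<phi> \<le> pi"
  defines "K \<equiv> (if \<phi> = pi then \<infinity> else ereal (2 * real n * tan (\<phi> / 2)))"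
  shows "ereal (2 * real n * tan (pi / real n)) \<le> K \<longleftrightarrow> 2 * pi / real n \<le> \<phi>"
    and "K \<le> ereal (2 * real n * tan (pi / real n)) \<longleftrightarrow> \<phi> \<le> 2 * pi / real n"
proof -
  have n0: "real n > 0" using n by simp
  have pn: "pi / real n < pi / 2" "0 < pi / real n" using n by (auto simp: field_simps)
  have th: "2 * pi / real n < pi" using n by (simp add: field_simps)
  show "ereal (2 * real n * tan (pi / real n)) \<le> K \<longleftrightarrow> 2 * pi / real n \<le> \<phi>"
  proof (cases "\<phi> = pi")
    case True then show ?thesis using th by (simp add: K_def)
  next
    case False
    then have p2: "\<phi> / 2 < pi / 2" using phi by simp
    have "tan (pi / real n) \<le> tan (\<phi> / 2) \<longleftrightarrow> pi / real n \<le> \<phi> / 2"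
      using tan_mono_le_eq[of "pi / real n" "\<phi>/2"] pn p2 phi by auto
    then show ?thesis using False n0 by (simp add: K_def field_simps)
  qed
  show "K \<le> ereal (2 * real n * tan (pi / real n)) \<longleftrightarrow> \<phi> \<le> 2 * pi / real n"
  proof (cases "\<phi> = pi")
    case True then show ?thesis using th by (simp add: K_def)
  next
    case False
    then have p2: "\<phi> / 2 < pi / 2" using phi by simp
    have "tan (\<phi> / 2) \<le> tan (pi / real n) \<longleftrightarrow> \<phi> / 2 \<le> pi / real n"
      using tan_mono_le_eq[of "\<phi>/2" "pi / real n"] pn p2 phi by auto
    then show ?thesis using False n0 by (simp add: K_def field_simps)
  qed
qed


lemma U_props:
  assumes p: "p \<in> Pn n" and n: "n \<ge> 3"
  assumes U_def: "U = (\<lambda>k. real n *\<^sub>R (vert n p (k + 1) - vert n p k))"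
  shows "\<And>k. norm (U k) = 1"
    and "\<And>k. U (k + int n) = U k"
    and "(\<Sum>k<n. U (int k)) = 0"
    and "\<And>k. vert n p (k + 1) = vert n p k + (1 / real n) *\<^sub>R U k"
    and "\<And>i. vec_angle (vert n p i - vert n p (i - 1)) (vert n p (i + 1) - vert n p i) = arccos (U (i - 1) \<bullet> U i)"
    and "\<And>i. kappa_d (vert n p (i - 1)) (vert n p i) (vert n p (i + 1)) =
        (if arccos (U (i - 1) \<bullet> U i) = pi then \<infinity> else ereal (2 * real n * tan (arccos (U (i - 1) \<bullet> U i) / 2)))"
proof -
  have n0: "real n > 0" using n by simp
  show un: "norm (U k) = 1" for k using vert_step[OF p, of k] n0 by (simp add: U_def)
  show "U (k + int n) = U k" for k
    using vert_per[OF p, of k] vert_per[OF p, of "k + 1"] n by (simp add: U_def algebra_simps)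
  have "(\<Sum>k<n. U (int k)) = real n *\<^sub>R (\<Sum>k<n. vert n p (int (Suc k)) - vert n p (int k))"
    by (simp add: U_def scaleR_sum_right add.commute)
  also have "(\<Sum>k<n. vert n p (int (Suc k)) - vert n p (int k)) = vert n p (int n) - vert n p (int 0)"
    by (rule sum_lessThan_telescope)
  also have "real n *\<^sub>R (vert n p (int n) - vert n p (int 0)) = 0" using vert_per[OF p, of 0] n by simp
  finally show "(\<Sum>k<n. U (int k)) = 0" .
  show vs: "vert n p (k + 1) = vert n p k + (1 / real n) *\<^sub>R U k" for k
    using n0 by (simp add: U_def)
  have d: "vert n p i - vert n p (i - 1) = (1 / real n) *\<^sub>R U (i - 1)" for i
    using vs[of "i - 1"] by simp
  have d2: "vert n p (i + 1) - vert n p i = (1 / real n) *\<^sub>R U i" for i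
    using vs[of i] by simp
  show va: "vec_angle (vert n p i - vert n p (i - 1)) (vert n p (i + 1) - vert n p i) = arccos (U (i - 1) \<bullet> U i)" for i
    unfolding d d2 by (rule vec_angle_scale[OF un un]) (use n0 in simp)
  show "kappa_d (vert n p (i - 1)) (vert n p i) (vert n p (i + 1)) =
        (if arccos (U (i - 1) \<bullet> U i) = pi then \<infinity> else ereal (2 * real n * tan (arccos (U (i - 1) \<bullet> U i) / 2)))" for i
  proof -
    have nn: "0 < n" using n by simp
    have a1: "norm (vert n p i - vert n p (i - 1)) = 1 / real n" using vert_step[OF p, of "i - 1"] by simp
    have a2: "norm (vert n p (i + 1) - vert n p i) = 1 / real n" using vert_step[OF p, of i] by simp
    show ?thesis unfolding kappa_char[where n=n and x="vert n p (i - 1)" and y="vert n p i" and z="vert n p (i + 1)", OF nn a1 a2] Let_def va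
      using n by simp
  qed
qed

lemma angle_all:
  fixes U :: "int \<Rightarrow> 'a"
  assumes per: "\<And>k. U (k + int n) = U k" and n: "n > 0"
    and H: "\<And>i. i \<in> {1..int n} \<Longrightarrow> P (U (i - 1)) (U i)"
  shows "P (U k) (U (k + 1))"
proof -
  define i where "i = k mod int n + 1"
  have n': "int n > 0" using n by simp
  have m: "0 \<le> k mod int n" "k mod int n < int n" using n' by simp_all
  have i: "i \<in> {1..int n}" using m unfolding i_def by simp
  have "U (i - 1) = U k" using periodic_mod[of U n, OF per, of k] by (simp add: i_def)
  moreover have "U i = U (k + 1)"
    using periodic_mod[of U n, OF per, of "k + 1"] periodic_mod[of U n, OF per, of i]
    by (simp add: i_def mod_add_left_eq)
  ultimately show ?thesis using H[OF i] by simp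
qed


lemma maxCurv_ge:
  assumes p: "p \<in> Pn n" and n: "n \<ge> 3"
  shows "ereal (2 * real n * tan (pi / real n)) \<le> maxCurv n p"
proof (rule ccontr)
  define U where "U = (\<lambda>k. real n *\<^sub>R (vert n p (k + 1) - vert n p k))"
  note UP = U_props[OF p n U_def]
  define \<phi> where "\<phi> i = arccos (U (i - 1) \<bullet> U i)" for i
  have phi: "0 \<le> \<phi> i" "\<phi> i \<le> pi" for i
    using inner_unit_abs_le[OF UP(1) UP(1), of "i - 1" i] unfolding \<phi>_def
    by (auto intro!: arccos_lbound arccos_ubound simp: abs_le_iff)
  assume "\<not> ereal (2 * real n * tan (pi / real n)) \<le> maxCurv n p"
  then have lt: "maxCurv n p < ereal (2 * real n * tan (pi / real n))" by simp
  have lt2: "\<phi> i < 2 * pi / real n" if i: "i \<in> {1..int n}" for i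
  proof -
    have "kappa_d (vert n p (i - 1)) (vert n p i) (vert n p (i + 1)) \<le> maxCurv n p"
      unfolding maxCurv_def using i by (intro Max_ge) auto
    then have "\<not> ereal (2 * real n * tan (pi / real n)) \<le> (if \<phi> i = pi then \<infinity> else ereal (2 * real n * tan (\<phi> i / 2)))"
      using lt UP(6)[of i] unfolding \<phi>_def by auto
    then show ?thesis using kappa_cmp(1)[OF n phi[of i]] by simp
  qed
  have all: "arccos (U k \<bullet> U (k + 1)) \<le> 2 * pi / real n" for k
    by (rule angle_all[of U n, OF UP(2)]) (use n lt2 in \<open>auto simp: \<phi>_def less_imp_le\<close>)
  have "U 0 \<bullet> U (0 + 1) = cos (2 * pi * real_of_int 1 / real n)"
    by (rule gram_regular[OF n UP(2) UP(1) UP(3) all])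
  then have "\<phi> 1 = 2 * pi / real n" unfolding \<phi>_def using n by (simp add: arccos_cos field_simps)
  moreover have "\<phi> 1 < 2 * pi / real n" using lt2[of 1] n by simp
  ultimately show False by simp
qed

lemma lin2:
  fixes a b :: "'a::real_vector"
  shows "R *\<^sub>R (A *\<^sub>R ((- s) *\<^sub>R a - c *\<^sub>R b) + B *\<^sub>R (c *\<^sub>R a - s *\<^sub>R b))
    = (R * (- A * s + B * c)) *\<^sub>R a + (R * (- A * c - B * s)) *\<^sub>R b"
  by (simp add: algebra_simps)

lemma lin3:
  fixes a b :: "'a::real_vector"
  assumes "R * (2 * s) = m"
  shows "(R * (2 * s * C)) *\<^sub>R a + (R * (2 * s * S)) *\<^sub>R b = m *\<^sub>R (C *\<^sub>R a + S *\<^sub>R b)"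
proof -
  have e1: "R * (2 * s * C) = m * C" using assms by (metis mult.assoc)
  have e2: "R * (2 * s * S) = m * S" using assms by (metis mult.assoc)
  show ?thesis unfolding e1 e2 by (simp add: scaleR_add_right)
qed

lemma maxCurv_le_regular:
  assumes p: "p \<in> Pn n" and n: "n \<ge> 3"
    and le: "maxCurv n p \<le> ereal (2 * real n * tan (pi / real n))"
  shows "regular_ngon n p"
proof -
  define U where "U = (\<lambda>k. real n *\<^sub>R (vert n p (k + 1) - vert n p k))"
  note UP = U_props[OF p n U_def]
  define \<phi> where "\<phi> i = arccos (U (i - 1) \<bullet> U i)" for i
  have phi: "0 \<le> \<phi> i" "\<phi> i \<le> pi" for i
    using inner_unit_abs_le[OF UP(1) UP(1), of "i - 1" i] unfolding \<phi>_def
    by (auto intro!: arccos_lbound arccos_ubound simp: abs_le_iff)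
  have le2: "\<phi> i \<le> 2 * pi / real n" if i: "i \<in> {1..int n}" for i
  proof -
    have "kappa_d (vert n p (i - 1)) (vert n p i) (vert n p (i + 1)) \<le> maxCurv n p"
      unfolding maxCurv_def using i by (intro Max_ge) auto
    then have "(if \<phi> i = pi then \<infinity> else ereal (2 * real n * tan (\<phi> i / 2))) \<le> ereal (2 * real n * tan (pi / real n))"
      using le UP(6)[of i] unfolding \<phi>_def by auto
    then show ?thesis using kappa_cmp(2)[OF n phi[of i]] by simp
  qed
  have all: "arccos (U k \<bullet> U (k + 1)) \<le> 2 * pi / real n" for k
    by (rule angle_all[of U n, OF UP(2)]) (use n le2 in \<open>auto simp: \<phi>_def\<close>)
  have G: "U i \<bullet> U (i + k) = cos (2 * pi * real_of_int k / real n)" for i k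
    by (rule gram_regular[OF n UP(2) UP(1) UP(3) all])
  obtain a b where ab: "norm a = 1" "norm b = 1" "a \<bullet> b = 0"
    and Uab: "\<And>k. U k = cos (2 * pi * real_of_int k / real n) *\<^sub>R a + sin (2 * pi * real_of_int k / real n) *\<^sub>R b"
    using recon[OF n G] by blast
  define h where "h = pi / real n"
  define R where "R = 1 / (2 * real n * sin (pi / real n))"
  have hpos: "0 < h" "h < pi" using n by (auto simp: h_def field_simps)
  have sh: "sin h > 0" using sin_gt_zero[OF hpos] by simp
  define e1 where "e1 = (- sin h) *\<^sub>R a - cos h *\<^sub>R b"
  define e2 where "e2 = cos h *\<^sub>R a - sin h *\<^sub>R b"
  have aa: "a \<bullet> a = 1" and bb: "b \<bullet> b = 1" and ba: "b \<bullet> a = 0"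
    using ab by (auto simp: dot_square_norm inner_commute)
  have sc: "sin h * sin h + cos h * cos h = 1" using sin_cos_squared_add[of h] unfolding power2_eq_square by linarith
  have e11: "e1 \<bullet> e1 = 1" unfolding e1_def
    by (simp add: inner_diff_left inner_diff_right aa bb ab(3) ba sc)
  have e22: "e2 \<bullet> e2 = 1" unfolding e2_def
    by (simp add: inner_diff_left inner_diff_right aa bb ab(3) ba)
  have e12: "e1 \<bullet> e2 = 0" unfolding e1_def e2_def
    by (simp add: inner_diff_left inner_diff_right aa bb ab(3) ba)
  define c where "c = vert n p 0 - R *\<^sub>R e1"
  define V where "V k = c + R *\<^sub>R (cos (2 * pi * real_of_int k / real n) *\<^sub>R e1 + sin (2 * pi * real_of_int k / real n) *\<^sub>R e2)" for k
  have Vstep: "V (k + 1) = V k + (1 / real n) *\<^sub>R U k" for k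
  proof -
    define x where "x = 2 * pi * real_of_int k / real n"
    have x1: "2 * pi * real_of_int (k + 1) / real n = x + 2 * h"
      using n by (simp add: x_def h_def field_simps)
    have R2: "R * (2 * sin h) = 1 / real n" using sh n by (simp add: R_def h_def field_simps)
    have "V (k + 1) - V k = R *\<^sub>R ((cos (x + 2 * h) - cos x) *\<^sub>R e1 + (sin (x + 2 * h) - sin x) *\<^sub>R e2)"
      unfolding V_def x1 x_def[symmetric] by (simp add: algebra_simps)
    also have "\<dots> = (R * (-(cos (x + 2*h) - cos x) * sin h + (sin (x + 2*h) - sin x) * cos h)) *\<^sub>R a
        + (R * (-(cos (x + 2*h) - cos x) * cos h - (sin (x + 2*h) - sin x) * sin h)) *\<^sub>R b"
      unfolding e1_def e2_def by (rule lin2)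
    also have "\<dots> = (1 / real n) *\<^sub>R U k"
      unfolding trig_a trig_b Uab x_def[symmetric] by (rule lin3[OF R2])
    finally show ?thesis by (simp add: algebra_simps)
  qed
  have VV: "vert n p k = V k" for k
  proof (induction k rule: int_induct[where k=0])
    case base then show ?case by (simp add: V_def c_def)
  next
    case (step1 i) then show ?case using Vstep[of i] UP(4)[of i] by simp
  next
    case (step2 i) then show ?case using Vstep[of "i - 1"] UP(4)[of "i - 1"] by simp
  qed
  show ?thesis unfolding regular_ngon_def
  proof (intro conjI exI)
    show "p \<in> Pn n" by (rule p)
    show "poly_shift n p (SOME t. poly_shift n p t)" by (rule Pn_shift[OF p])
    show "norm e1 = 1" using e11 by (simp add: norm_eq_1)
    show "norm e2 = 1" using e22 by (simp add: norm_eq_1)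
    show "e1 \<bullet> e2 = 0" by (rule e12)
    show "\<forall>k. p ((SOME t. poly_shift n p t) + real_of_int k / real n) = c + (1 / (2 * real n * sin (pi / real n))) *\<^sub>R
           (cos (2 * pi * real_of_int k / real n) *\<^sub>R e1 + sin (2 * pi * real_of_int k / real n) *\<^sub>R e2)"
      using VV unfolding vert_def V_def R_def by simp
  qed
qed


lemma cos_odd_le:
  assumes n: "n \<ge> 3"
  shows "cos (real_of_int (2 * j - 1) * (pi / real n)) \<le> cos (pi / real n)"
proof -
  define h where "h = pi / real n"
  have hp: "0 < h" "h \<le> pi" using n by (auto simp: h_def field_simps)
  define j' where "j' = j mod int n"
  have j'b: "0 \<le> j'" "j' < int n" using n by (simp_all add: j'_def)
  have "real_of_int (2 * j - 1) * h = real_of_int (2 * j' - 1) * h + (2 * pi) * real_of_int (j div int n)"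
  proof -
    have "j = j' + int n * (j div int n)" by (simp add: j'_def)
    then have "real_of_int (2 * j - 1) = real_of_int (2 * j' - 1) + 2 * real n * real_of_int (j div int n)"
      by (metis (mono_tags, opaque_lifting) of_int_add of_int_mult of_int_of_nat_eq of_int_diff distrib_left mult.assoc of_int_numeral add_diff_eq diff_add_eq)
    then show ?thesis using n by (simp add: h_def field_simps)
  qed
  then have e: "cos (real_of_int (2 * j - 1) * h) = cos (real_of_int (2 * j' - 1) * h)" by (simp add: cos_add)
  define y where "y = real_of_int (2 * j' - 1) * h"
  have "cos y \<le> cos h"
  proof (cases "j' = 0")
    case True
    then have "y = - h" by (simp add: y_def)
    then show ?thesis by simp
  next
    case False
    then have j1: "1 \<le> j'" using j'b by simp
    have yl: "h \<le> y" using j1 hp by (simp add: y_def)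
    have yu: "y \<le> 2 * pi - h"
    proof -
      have "real_of_int (2 * j' - 1) \<le> 2 * real n - 1" using j'b by linarith
      then have "y \<le> (2 * real n - 1) * h" using hp by (simp add: y_def mult_right_mono)
      also have "\<dots> = 2 * pi - h" using n by (simp add: h_def field_simps)
      finally show ?thesis .
    qed
    show ?thesis
    proof (cases "y \<le> pi")
      case True then show ?thesis using yl hp by (intro cos_monotone_0_pi_le) auto
    next
      case False
      have "cos y = cos (2 * pi - y)" by (simp add: cos_diff)
      also have "\<dots> \<le> cos h" using yu False hp by (intro cos_monotone_0_pi_le) auto
      finally show ?thesis .
    qed
  qed
  then show ?thesis using e by (simp add: h_def y_def)
qed

lemma frame_real:
  fixes a b a' b' co si :: real
  assumes "co * co + si * si = 1"
  shows "a * a' + b * b' = (a * co + b * si) * (a' * co + b' * si) + (a * (- si) + b * co) * (a' * (- si) + b' * co)"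
proof -
  have "(a * co + b * si) * (a' * co + b' * si) + (a * (- si) + b * co) * (a' * (- si) + b' * co)
     = a * a' * (co * co + si * si) + b * b' * (co * co + si * si)" by algebra
  then show ?thesis using assms by simp
qed

lemma onesided:
  fixes g :: "real \<Rightarrow> 'a::real_inner"
  assumes d: "norm d = 1" and dl: "\<delta> > 0" and sg: "\<sigma> = 1 \<or> \<sigma> = -1"
    and H: "\<And>\<eta>. 0 < \<eta> \<Longrightarrow> \<eta> < \<delta> \<Longrightarrow> g (s + \<sigma> * \<eta>) = g s + \<eta> *\<^sub>R d"
  shows "(\<exists>e>0. \<forall>u. \<bar>u - s\<bar> < e \<longrightarrow> (norm (x - g u))\<^sup>2 \<le> (norm (x - g s))\<^sup>2) \<Longrightarrow> (g s - x) \<bullet> d < 0"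
    and "(\<exists>e>0. \<forall>u. \<bar>u - s\<bar> < e \<longrightarrow> (norm (x - g s))\<^sup>2 \<le> (norm (x - g u))\<^sup>2) \<Longrightarrow> (g s - x) \<bullet> d \<ge> 0"
proof -
  define w where "w = g s - x"
  have dd: "d \<bullet> d = 1" using d by (simp add: dot_square_norm)
  have fe: "(norm (x - g (s + \<sigma> * \<eta>)))\<^sup>2 = (norm (x - g s))\<^sup>2 + 2 * \<eta> * (w \<bullet> d) + \<eta>\<^sup>2"
    if "0 < \<eta>" "\<eta> < \<delta>" for \<eta>
  proof -
    have "x - g (s + \<sigma> * \<eta>) = - (w + \<eta> *\<^sub>R d)" using H[OF that] by (simp add: w_def)
    then have "norm (x - g (s + \<sigma> * \<eta>)) = norm (w + \<eta> *\<^sub>R d)" by (metis norm_minus_cancel)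
    then have "(norm (x - g (s + \<sigma> * \<eta>)))\<^sup>2 = (w + \<eta> *\<^sub>R d) \<bullet> (w + \<eta> *\<^sub>R d)"
      by (simp add: dot_square_norm)
    also have "\<dots> = w \<bullet> w + 2 * \<eta> * (w \<bullet> d) + \<eta>\<^sup>2"
      by (simp add: inner_add_left inner_add_right dd inner_commute power2_eq_square algebra_simps)
    also have "w \<bullet> w = (norm (x - g s))\<^sup>2" by (simp add: w_def dot_square_norm norm_minus_commute)
    finally show ?thesis .
  qed
  have absu: "\<bar>(s + \<sigma> * \<eta>) - s\<bar> = \<eta>" if "0 < \<eta>" for \<eta> using sg that by auto
  show "(g s - x) \<bullet> d < 0" if M: "\<exists>e>0. \<forall>u. \<bar>u - s\<bar> < e \<longrightarrow> (norm (x - g u))\<^sup>2 \<le> (norm (x - g s))\<^sup>2"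
  proof -
    obtain e where e: "e > 0" "\<forall>u. \<bar>u - s\<bar> < e \<longrightarrow> (norm (x - g u))\<^sup>2 \<le> (norm (x - g s))\<^sup>2" using M by blast
    define \<eta> where "\<eta> = min e \<delta> / 2"
    have \<eta>: "0 < \<eta>" "\<eta> < \<delta>" "\<eta> < e" using e dl by (auto simp: \<eta>_def)
    have "(norm (x - g (s + \<sigma> * \<eta>)))\<^sup>2 \<le> (norm (x - g s))\<^sup>2" using e(2) absu[OF \<eta>(1)] \<eta> by auto
    then have "2 * \<eta> * (w \<bullet> d) + \<eta>\<^sup>2 \<le> 0" using fe[OF \<eta>(1,2)] by simp
    then have "\<eta> * (2 * (w \<bullet> d) + \<eta>) \<le> 0" by (simp add: power2_eq_square algebra_simps)
    then have "2 * (w \<bullet> d) + \<eta> \<le> 0" using \<eta>(1) by (simp add: mult_le_0_iff)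
    then show ?thesis using \<eta>(1) by (simp add: w_def)
  qed
  show "(g s - x) \<bullet> d \<ge> 0" if M: "\<exists>e>0. \<forall>u. \<bar>u - s\<bar> < e \<longrightarrow> (norm (x - g s))\<^sup>2 \<le> (norm (x - g u))\<^sup>2"
  proof (rule ccontr)
    assume neg: "\<not> (g s - x) \<bullet> d \<ge> 0"
    then have wd: "w \<bullet> d < 0" by (simp add: w_def)
    obtain e where e: "e > 0" "\<forall>u. \<bar>u - s\<bar> < e \<longrightarrow> (norm (x - g s))\<^sup>2 \<le> (norm (x - g u))\<^sup>2" using M by blast
    define \<eta> where "\<eta> = min (min e \<delta> / 2) (- (w \<bullet> d))"
    have \<eta>: "0 < \<eta>" "\<eta> < \<delta>" "\<eta> < e" "\<eta> \<le> - (w \<bullet> d)" using e dl wd by (auto simp: \<eta>_def)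
    have "(norm (x - g s))\<^sup>2 \<le> (norm (x - g (s + \<sigma> * \<eta>)))\<^sup>2" using e(2) absu[OF \<eta>(1)] \<eta> by auto
    then have "0 \<le> 2 * \<eta> * (w \<bullet> d) + \<eta>\<^sup>2" using fe[OF \<eta>(1,2)] by simp
    then have "0 \<le> \<eta> * (2 * (w \<bullet> d) + \<eta>)" by (simp add: power2_eq_square algebra_simps)
    moreover have "2 * (w \<bullet> d) + \<eta> < 0" using \<eta>(4) wd by linarith
    ultimately show False using \<eta>(1) by (simp add: mult_pos_neg zero_le_mult_iff)
  qed
qed

lemma real_max_case:
  fixes z1 z2 h :: real
  assumes h: "0 < h" "h < pi / 2" and z2: "z2 < 0" and b: "z1 * sin (2 * h) + z2 * cos (2 * h) > 0"
  shows "z1 * cos h - z2 * sin h \<ge> cos h * sqrt (z1\<^sup>2 + z2\<^sup>2)"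
proof -
  define S where "S = sin (2 * h)"
  define C where "C = cos (2 * h)"
  have S0: "S > 0" unfolding S_def using h by (intro sin_gt_zero) auto
  have CS: "C * C + S * S = 1" using sin_cos_squared_add[of "2*h"] unfolding S_def C_def power2_eq_square by linarith
  have C1: "C \<le> 1" by (simp add: C_def)
  define a where "a = - z2 / S"
  define bb where "bb = z1 - a * C"
  have a0: "a > 0" using z2 S0 by (simp add: a_def divide_neg_pos)
  have z2e: "z2 = - a * S" using S0 by (simp add: a_def)
  have z1e: "z1 = bb + a * C" by (simp add: bb_def)
  have "bb * S = z1 * S + z2 * C" using S0 by (simp add: bb_def a_def field_simps)
  then have "bb * S > 0" using b unfolding S_def C_def by simp
  then have b0: "bb > 0" using S0 by (simp add: zero_less_mult_iff)
  have lhs: "z1 * cos h - z2 * sin h = (a + bb) * cos h"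
  proof -
    have e: "C * cos h + S * sin h = cos h" unfolding C_def S_def using cos_diff[of "2*h" h] by simp
    have "z1 * cos h - z2 * sin h = bb * cos h + a * (C * cos h + S * sin h)"
      unfolding z1e z2e by (simp add: algebra_simps)
    then show ?thesis unfolding e by (simp add: algebra_simps)
  qed
  have "z1\<^sup>2 + z2\<^sup>2 = a * a * (C * C + S * S) + bb * bb + 2 * (a * bb * C)"
    unfolding z1e z2e by (simp add: power2_eq_square algebra_simps)
  also have "\<dots> \<le> (a + bb)\<^sup>2"
  proof -
    have "a * bb * C \<le> a * bb" using mult_left_le[OF C1, of "a * bb"] a0 b0 by simp
    then show ?thesis unfolding CS by (simp add: power2_eq_square algebra_simps)
  qed
  finally have "sqrt (z1\<^sup>2 + z2\<^sup>2) \<le> sqrt ((a + bb)\<^sup>2)" by (rule real_sqrt_le_mono)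
  also have "\<dots> = a + bb" using a0 b0 by simp
  finally have sq: "sqrt (z1\<^sup>2 + z2\<^sup>2) \<le> a + bb" .
  have "cos h > 0" using h by (intro cos_gt_zero) auto
  then have "cos h * sqrt (z1\<^sup>2 + z2\<^sup>2) \<le> cos h * (a + bb)" using sq by (intro mult_left_mono) auto
  then show ?thesis unfolding lhs by (simp add: mult.commute)
qed

lemma real_min_case:
  fixes z1 z2 S C :: real
  assumes S0: "S > 0" and "z2 \<ge> 0" "z1 * S + z2 * C \<le> 0" "z1 \<ge> 0" "z1 * C - z2 * S \<ge> 0"
  shows "z1 = 0 \<and> z2 = 0"
proof -
  have "S * (z1 * z1 + z2 * z2) = z1 * (z1 * S + z2 * C) - z2 * (z1 * C - z2 * S)" by (simp add: algebra_simps)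
  also have "\<dots> \<le> 0"
  proof -
    have t1: "z1 * (z1 * S + z2 * C) \<le> 0" using assms by (intro mult_nonneg_nonpos) auto
    have t2: "z2 * (z1 * C - z2 * S) \<ge> 0" using assms by (intro mult_nonneg_nonneg) auto
    show ?thesis using t1 t2 by linarith
  qed
  finally have "z1 * z1 + z2 * z2 \<le> 0" using S0 by (simp add: mult_le_0_iff)
  then show ?thesis by (simp add: sum_squares_le_zero_iff)
qed

locale regp =
  fixes n :: nat and q :: "real \<Rightarrow> 'a::euclidean_space" and t0 :: real and c e1 e2 :: 'a
  assumes n3: "n \<ge> 3" and ps: "poly_shift n q t0"
    and ne1: "norm e1 = 1" and ne2: "norm e2 = 1" and e12: "e1 \<bullet> e2 = 0"
    and vq: "\<And>k::int. q (t0 + of_int k / real n) = c + (1 / (2 * real n * sin (pi / real n))) *\<^sub>R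
               (cos (2 * pi * of_int k / real n) *\<^sub>R e1 + sin (2 * pi * of_int k / real n) *\<^sub>R e2)"
begin

definition "h = pi / real n"
definition "R = 1 / (2 * real n * sin h)"
definition "r = R * cos h"
definition "pl a b = a *\<^sub>R e1 + b *\<^sub>R e2"
definition "Nv a = pl (cos a) (sin a)"
definition "Dv a = pl (- sin a) (cos a)"
definition "ang k = 2 * pi * real_of_int k / real n + h"
definition "V k = q (t0 + of_int k / real n)"

lemma n0: "real n > 0" using n3 by simp

lemma hpos: "0 < h" "h < pi / 2" "h \<le> pi / 3" using n3 by (auto simp: h_def field_simps)

lemma sinh: "sin h > 0" using hpos by (intro sin_gt_zero) auto
lemma cosh: "cos h > 0" using hpos by (intro cos_gt_zero) auto

lemma Rpos: "R > 0" using sinh n0 by (simp add: R_def)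
lemma rpos: "r > 0" using Rpos cosh by (simp add: r_def)

lemma r_eq: "r = 1 / (2 * real n * tan (pi / real n))"
  using sinh cosh n0 by (simp add: r_def R_def h_def[symmetric] tan_def field_simps)

lemma e11: "e1 \<bullet> e1 = 1" using ne1 by (simp add: dot_square_norm)
lemma e22: "e2 \<bullet> e2 = 1" using ne2 by (simp add: dot_square_norm)
lemma e21: "e2 \<bullet> e1 = 0" using e12 by (simp add: inner_commute)

lemma pl_inner: "pl a b \<bullet> pl a' b' = a * a' + b * b'"
  by (simp add: pl_def inner_add_left inner_add_right e11 e22 e12 e21)

lemma pl_add: "pl a b + pl a' b' = pl (a + a') (b + b')"
  by (simp add: pl_def algebra_simps)
lemma pl_diff: "pl a b - pl a' b' = pl (a - a') (b - b')"
  by (simp add: pl_def algebra_simps)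
lemma pl_scale: "t *\<^sub>R pl a b = pl (t * a) (t * b)"
  by (simp add: pl_def algebra_simps)
lemma pl_zero: "pl 0 0 = 0" by (simp add: pl_def)

lemma NN: "Nv a \<bullet> Nv b = cos (a - b)" by (simp add: Nv_def pl_inner cos_diff)
lemma ND: "Nv a \<bullet> Dv b = sin (a - b)" by (simp add: Nv_def Dv_def pl_inner sin_diff algebra_simps)
lemma DN: "Dv a \<bullet> Nv b = sin (b - a)" by (simp add: Nv_def Dv_def pl_inner sin_diff algebra_simps)
lemma DD: "Dv a \<bullet> Dv b = cos (a - b)" by (simp add: Nv_def Dv_def pl_inner cos_diff algebra_simps)

lemma normD: "norm (Dv a) = 1" using DD[of a a] by (simp add: norm_eq_1)

lemma frame:
  "pl a b \<bullet> pl a' b' = (pl a b \<bullet> Nv \<phi>) * (pl a' b' \<bullet> Nv \<phi>) + (pl a b \<bullet> Dv \<phi>) * (pl a' b' \<bullet> Dv \<phi>)"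
proof -
  have e: "cos \<phi> * cos \<phi> + sin \<phi> * sin \<phi> = 1" using sin_cos_squared_add[of \<phi>] unfolding power2_eq_square by linarith
  show ?thesis unfolding Nv_def Dv_def pl_inner using frame_real[OF e] by simp
qed

lemma V_eq: "V k = c + R *\<^sub>R Nv (ang k - h)"
  using vq[of k] by (simp add: V_def R_def h_def Nv_def pl_def ang_def)

lemma edge: "V (k + 1) - V k = (1 / real n) *\<^sub>R Dv (ang k)"
proof -
  define A where "A = ang k"
  have a1: "ang (k + 1) - h = A + h" unfolding A_def ang_def using n0 by (simp add: h_def field_simps)
  have a0: "ang k - h = A - h" by (simp add: A_def)
  have "V (k + 1) - V k = R *\<^sub>R (Nv (A + h) - Nv (A - h))" unfolding V_eq a1 a0 by (simp add: algebra_simps)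
  also have "Nv (A + h) - Nv (A - h) = (2 * sin h) *\<^sub>R Dv A"
    unfolding Nv_def Dv_def pl_diff pl_scale by (simp add: cos_add cos_diff sin_add sin_diff algebra_simps)
  also have "R *\<^sub>R ((2 * sin h) *\<^sub>R Dv A) = (1 / real n) *\<^sub>R Dv A"
    using sinh n0 by (simp add: R_def)
  finally show ?thesis by (simp add: A_def)
qed

lemma ps_aff:
  assumes "0 \<le> s" "s \<le> 1"
  shows "q (t0 + (of_int k + s) / real n) = (1 - s) *\<^sub>R V k + s *\<^sub>R V (k + 1)"
proof -
  have s: "s \<in> {0..1}" using assms by simp
  have e: "q (t0 + (of_int k + s) / real n) =
              (1 - s) *\<^sub>R q (t0 + of_int k / real n) + s *\<^sub>R q (t0 + (of_int k + 1) / real n)"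
    by (rule ps[unfolded poly_shift_def, THEN spec[of _ k], THEN conjunct2, THEN bspec, OF s])
  have "real_of_int (k + 1) = of_int k + 1" by simp
  then have "V (k + 1) = q (t0 + (of_int k + 1) / real n)" unfolding V_def by simp
  then show ?thesis using e unfolding V_def by simp
qed

lemma affine_pt:
  assumes "0 \<le> s" "s \<le> 1"
  shows "q (t0 + (of_int k + s) / real n) = V k + (s / real n) *\<^sub>R Dv (ang k)"
proof -
  have "q (t0 + (of_int k + s) / real n) = (1 - s) *\<^sub>R V k + s *\<^sub>R V (k + 1)"
    using ps_aff assms by blast
  also have "\<dots> = V k + s *\<^sub>R (V (k + 1) - V k)" by (simp add: algebra_simps)
  finally show ?thesis unfolding edge by simp
qed

lemma point_rep:
  "\<exists>k \<sigma>. 0 \<le> \<sigma> \<and> \<sigma> < 1 \<and> t = t0 + (of_int k + \<sigma>) / real n"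
proof -
  define k where "k = \<lfloor>real n * (t - t0)\<rfloor>"
  define \<sigma> where "\<sigma> = real n * (t - t0) - of_int k"
  have "0 \<le> \<sigma>" "\<sigma> < 1" unfolding \<sigma>_def k_def by linarith+
  moreover have "t = t0 + (of_int k + \<sigma>) / real n" using n0 by (simp add: \<sigma>_def field_simps)
  ultimately show ?thesis by blast
qed

lemma V_c_plane: "\<exists>a b. V k - c = pl a b"
  unfolding V_eq Nv_def by (auto simp: pl_scale)

lemma D_plane: "\<exists>a b. Dv x = pl a b" by (auto simp: Dv_def)

lemma q_plane: "\<exists>a b. q t - c = pl a b"
proof -
  obtain k \<sigma> where ks: "0 \<le> \<sigma>" "\<sigma> < 1" "t = t0 + (of_int k + \<sigma>) / real n" using point_rep by blast
  obtain a b where ab: "V k - c = pl a b" using V_c_plane[of k] by blast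
  have "q t - c = (V k - c) + (\<sigma> / real n) *\<^sub>R Dv (ang k)" using affine_pt[of \<sigma> k] ks by simp
  also have "\<dots> = pl (a + \<sigma> / real n * (- sin (ang k))) (b + \<sigma> / real n * cos (ang k))"
    unfolding ab Dv_def pl_scale pl_add ..
  finally show ?thesis by blast
qed

lemma conv_V: "(V m - c) \<bullet> Nv (ang k) \<le> r"
proof -
  have "(V m - c) \<bullet> Nv (ang k) = R * cos (ang m - h - ang k)" unfolding V_eq by (simp add: NN)
  also have "ang m - h - ang k = real_of_int (2 * (m - k) - 1) * h"
    unfolding ang_def h_def using n0 by (simp add: field_simps)
  also have "R * cos (real_of_int (2 * (m - k) - 1) * h) \<le> R * cos h"
    using cos_odd_le[OF n3, of "m - k"] Rpos by (simp add: h_def)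
  finally show ?thesis by (simp add: r_def)
qed

lemma conv_q: "(q t - c) \<bullet> Nv (ang k) \<le> r"
proof -
  obtain m \<sigma> where ks: "0 \<le> \<sigma>" "\<sigma> < 1" "t = t0 + (of_int m + \<sigma>) / real n" using point_rep by blast
  have "q t = (1 - \<sigma>) *\<^sub>R V m + \<sigma> *\<^sub>R V (m + 1)"
    using ps_aff[of \<sigma> m] ks by simp
  then have "q t - c = (1 - \<sigma>) *\<^sub>R (V m - c) + \<sigma> *\<^sub>R (V (m + 1) - c)" by (simp add: algebra_simps)
  then have "(q t - c) \<bullet> Nv (ang k) = (1 - \<sigma>) * ((V m - c) \<bullet> Nv (ang k)) + \<sigma> * ((V (m + 1) - c) \<bullet> Nv (ang k))"
    by (simp add: inner_add_left)
  also have "\<dots> \<le> (1 - \<sigma>) * r + \<sigma> * r"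
    using ks conv_V[of m k] conv_V[of "m + 1" k] by (intro add_mono mult_left_mono) auto
  finally show ?thesis by (simp add: algebra_simps)
qed

end


lemma lin4:
  fixes V0 V1 D0 D1 :: "'a::real_vector" and m \<sigma> :: real
  shows "\<sigma> *\<^sub>R (V0 + (\<sigma> * m) *\<^sub>R D0) + (1 - \<sigma>) *\<^sub>R ((V0 + m *\<^sub>R D0) + (\<sigma> * m) *\<^sub>R D1) - (V0 + m *\<^sub>R D0)
     = (\<sigma> * (1 - \<sigma>) * m) *\<^sub>R (D1 - D0)"
proof -
  have "\<sigma> *\<^sub>R (V0 + (\<sigma> * m) *\<^sub>R D0) + (1 - \<sigma>) *\<^sub>R ((V0 + m *\<^sub>R D0) + (\<sigma> * m) *\<^sub>R D1) - (V0 + m *\<^sub>R D0)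
     = (\<sigma> + (1 - \<sigma>) - 1) *\<^sub>R V0 + (\<sigma> * (\<sigma> * m) + (1 - \<sigma>) * m - m) *\<^sub>R D0 + ((1 - \<sigma>) * (\<sigma> * m)) *\<^sub>R D1"
    by (simp only: scaleR_add_right scaleR_add_left scaleR_diff_left scaleR_scaleR) (simp add: algebra_simps)
  also have "\<dots> = (\<sigma> * (1 - \<sigma>) * m) *\<^sub>R (D1 - D0)"
  proof -
    have "\<sigma> * (\<sigma> * m) + (1 - \<sigma>) * m - m = - (\<sigma> * (1 - \<sigma>) * m)" by (simp add: algebra_simps)
    then show ?thesis by (simp add: algebra_simps)
  qed
  finally show ?thesis .
qed

context regp begin

lemma ang_prev: "ang (k - 1) = ang k - 2 * h"
  unfolding ang_def h_def using n0 by (simp add: field_simps)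

lemma VcN: "(V k - c) \<bullet> Nv (ang k) = r"
  unfolding V_eq by (simp add: NN r_def)
lemma VcD: "(V k - c) \<bullet> Dv (ang k) = - R * sin h"
  unfolding V_eq by (simp add: ND)
lemma VcN': "(V k - c) \<bullet> Nv (ang (k - 1)) = r"
  unfolding V_eq ang_prev by (simp add: NN r_def)
lemma DN0: "Dv a \<bullet> Nv a = 0" by (simp add: DN)

lemma frame2:
  assumes "u = pl a b" "v = pl a' b'"
  shows "u \<bullet> v = (u \<bullet> Nv \<phi>) * (v \<bullet> Nv \<phi>) + (u \<bullet> Dv \<phi>) * (v \<bullet> Dv \<phi>)"
  using frame assms by simp

lemma half:
  assumes ne: "q t \<noteq> q s" and le: "local_extremum (\<lambda>u. (norm (q t - q u))\<^sup>2) s"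
  shows "r * norm (q s - q t) \<le> (q s - q t) \<bullet> (q s - c)"
proof -
  obtain k \<sigma> where ks: "0 \<le> \<sigma>" "\<sigma> < 1" "s = t0 + (of_int k + \<sigma>) / real n" using point_rep by blast
  define \<phi> where "\<phi> = ang k"
  define y where "y = q s"
  define x where "x = q t"
  define w where "w = y - x"
  have y: "y = V k + (\<sigma> / real n) *\<^sub>R Dv \<phi>" unfolding y_def \<phi>_def ks(3) using ks by (intro affine_pt) auto
  have fwd: "q (s + 1 * \<eta>) = q s + \<eta> *\<^sub>R Dv \<phi>" if "0 < \<eta>" "\<eta> < (1 - \<sigma>) / real n" for \<eta>
  proof -
    have "s + 1 * \<eta> = t0 + (of_int k + (\<sigma> + real n * \<eta>)) / real n" using ks(3) n0 by (simp add: field_simps)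
    moreover have "0 \<le> \<sigma> + real n * \<eta>" "\<sigma> + real n * \<eta> \<le> 1" using that ks n0 by (auto simp: field_simps)
    ultimately have "q (s + 1 * \<eta>) = V k + ((\<sigma> + real n * \<eta>) / real n) *\<^sub>R Dv \<phi>" unfolding \<phi>_def by (simp add: affine_pt)
    also have "\<dots> = y + \<eta> *\<^sub>R Dv \<phi>" unfolding y using n0 by (simp add: add_divide_distrib scaleR_add_left)
    finally show ?thesis by (simp add: y_def)
  qed
  have d1: "(1 - \<sigma>) / real n > 0" using ks n0 by simp
  have sg1: "(1::real) = 1 \<or> (1::real) = -1" by simp
  have sg2: "(-1::real) = 1 \<or> (-1::real) = -1" by simp
  note OS1 = onesided[where d="Dv \<phi>" and \<delta>="(1 - \<sigma>) / real n" and \<sigma>=1 and g=q and s=s and x=x, OF normD d1 sg1 fwd]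
  have le': "(\<exists>e>0. \<forall>u. \<bar>u - s\<bar> < e \<longrightarrow> (norm (x - q u))\<^sup>2 \<le> (norm (x - q s))\<^sup>2) \<or>
             (\<exists>e>0. \<forall>u. \<bar>u - s\<bar> < e \<longrightarrow> (norm (x - q s))\<^sup>2 \<le> (norm (x - q u))\<^sup>2)"
    using le unfolding local_extremum_def x_def by simp
  obtain ya yb where yab: "y - c = pl ya yb" using q_plane unfolding y_def by blast
  obtain xa xb where xab: "x - c = pl xa xb" using q_plane unfolding x_def by blast
  have wyx: "w = (y - c) - (x - c)" by (simp add: w_def)
  have wpl: "w = pl (ya - xa) (yb - xb)" unfolding wyx yab xab pl_diff ..
  have Dpl: "Dv a = pl (- sin a) (cos a)" for a by (simp add: Dv_def)
  have Npl: "Nv a = pl (cos a) (sin a)" for a by (simp add: Nv_def)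
  have normw: "norm w = sqrt (w \<bullet> w)" by (simp add: norm_eq_sqrt_inner)
  have wne: "w \<noteq> 0" using ne by (simp add: w_def x_def y_def)
  have convx: "(x - c) \<bullet> Nv (ang j) \<le> r" for j unfolding x_def by (rule conv_q)
  show ?thesis unfolding y_def[symmetric] x_def[symmetric] w_def[symmetric]
  proof (cases "\<sigma> > 0")
    case True
    have bwd: "q (s + (-1) * \<eta>) = q s + \<eta> *\<^sub>R (- Dv \<phi>)" if "0 < \<eta>" "\<eta> < \<sigma> / real n" for \<eta>
    proof -
      have p1: "0 < real n * \<eta>" using that n0 by simp
      have p2: "real n * \<eta> < \<sigma>" using that n0 by (simp add: field_simps)
      have "s + (-1) * \<eta> = t0 + (of_int k + (\<sigma> - real n * \<eta>)) / real n" using ks(3) n0 by (simp add: field_simps)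
      moreover have "0 \<le> \<sigma> - real n * \<eta>" "\<sigma> - real n * \<eta> \<le> 1" using ks p1 p2 by auto
      ultimately have "q (s + (-1) * \<eta>) = V k + ((\<sigma> - real n * \<eta>) / real n) *\<^sub>R Dv \<phi>" unfolding \<phi>_def by (simp add: affine_pt)
      also have "\<dots> = y + \<eta> *\<^sub>R (- Dv \<phi>)" unfolding y using n0 by (simp add: diff_divide_distrib scaleR_diff_left)
      finally show ?thesis by (simp add: y_def)
    qed
    have d2: "\<sigma> / real n > 0" using True n0 by simp
    have nD: "norm (- Dv \<phi>) = 1" using normD by simp
    note OS2 = onesided[where d="- Dv \<phi>" and \<delta>="\<sigma> / real n" and \<sigma>="-1" and g=q and s=s and x=x, OF nD d2 sg2 bwd]
    from le' have wD: "w \<bullet> Dv \<phi> = 0"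
    proof
      assume M: "\<exists>e>0. \<forall>u. \<bar>u - s\<bar> < e \<longrightarrow> (norm (x - q u))\<^sup>2 \<le> (norm (x - q s))\<^sup>2"
      have "(q s - x) \<bullet> Dv \<phi> < 0" using OS1(1) M by blast
      moreover have "(q s - x) \<bullet> (- Dv \<phi>) < 0" using OS2(1) M by blast
      ultimately show ?thesis by (simp add: inner_minus_right)
    next
      assume M: "\<exists>e>0. \<forall>u. \<bar>u - s\<bar> < e \<longrightarrow> (norm (x - q s))\<^sup>2 \<le> (norm (x - q u))\<^sup>2"
      have "(q s - x) \<bullet> Dv \<phi> \<ge> 0" using OS1(2) M by blast
      moreover have "(q s - x) \<bullet> (- Dv \<phi>) \<ge> 0" using OS2(2) M by blast
      ultimately show ?thesis unfolding w_def y_def by (simp add: inner_minus_right)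
    qed
    have ww: "w \<bullet> w = (w \<bullet> Nv \<phi>) * (w \<bullet> Nv \<phi>)" using frame2[OF wpl wpl, of \<phi>] wD by simp
    have yN: "(y - c) \<bullet> Nv \<phi> = r"
    proof -
      have e: "y - c = (V k - c) + (\<sigma> / real n) *\<^sub>R Dv \<phi>" unfolding y by simp
      have v: "(V k - c) \<bullet> Nv \<phi> = r" unfolding \<phi>_def by (rule VcN)
      show ?thesis unfolding e inner_add_left inner_scaleR_left v DN0 by simp
    qed
    have wN: "w \<bullet> Nv \<phi> \<ge> 0"
    proof -
      have "w \<bullet> Nv \<phi> = (y - c) \<bullet> Nv \<phi> - (x - c) \<bullet> Nv \<phi>" unfolding wyx inner_diff_left ..
      then show ?thesis using yN convx[of k] unfolding \<phi>_def by linarith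
    qed
    have nw: "norm w = w \<bullet> Nv \<phi>" unfolding normw ww using wN by simp
    have "w \<bullet> (y - c) = (w \<bullet> Nv \<phi>) * r" using frame2[OF wpl yab, of \<phi>] wD yN by simp
    then show "r * norm w \<le> w \<bullet> (y - c)" unfolding nw by simp
  next
    case False
    then have s0: "\<sigma> = 0" using ks by simp
    define \<psi> where "\<psi> = ang (k - 1)"
    have \<psi>: "\<psi> = \<phi> - 2 * h" unfolding \<psi>_def \<phi>_def by (rule ang_prev)
    have yV: "y = V k" using y s0 by simp
    have bwd: "q (s + (-1) * \<eta>) = q s + \<eta> *\<^sub>R (- Dv \<psi>)" if "0 < \<eta>" "\<eta> < 1 / real n" for \<eta>
    proof -
      have eq: "s + (-1) * \<eta> = t0 + (of_int (k - 1) + (1 - real n * \<eta>)) / real n" using ks(3) s0 n0 by (simp add: field_simps)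
      have b: "0 \<le> 1 - real n * \<eta>" "1 - real n * \<eta> \<le> 1" using that n0 by (auto simp: field_simps)
      have "q (s + (-1) * \<eta>) = V (k - 1) + ((1 - real n * \<eta>) / real n) *\<^sub>R Dv \<psi>" unfolding \<psi>_def eq by (rule affine_pt[OF b])
      also have "\<dots> = (V (k - 1) + (1 / real n) *\<^sub>R Dv \<psi>) + \<eta> *\<^sub>R (- Dv \<psi>)" using n0 by (simp add: diff_divide_distrib scaleR_diff_left)
      also have "V (k - 1) + (1 / real n) *\<^sub>R Dv \<psi> = V k" using edge[of "k - 1"] unfolding \<psi>_def by (simp add: algebra_simps)
      finally show ?thesis using yV by (simp add: y_def)
    qed
    have d2: "1 / real n > 0" using n0 by simp
    have nD: "norm (- Dv \<psi>) = 1" using normD by simp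
    note OS2 = onesided[where d="- Dv \<psi>" and \<delta>="1 / real n" and \<sigma>="-1" and g=q and s=s and x=x, OF nD d2 sg2 bwd]
    define z1 where "z1 = w \<bullet> Nv \<phi>"
    define z2 where "z2 = w \<bullet> Dv \<phi>"
    have wD': "w \<bullet> Dv \<psi> = z1 * sin (2 * h) + z2 * cos (2 * h)"
      using frame2[where \<phi>=\<phi>, OF wpl Dpl[of \<psi>]] unfolding z1_def z2_def \<psi> by (simp add: DN DD)
    have wN': "w \<bullet> Nv \<psi> = z1 * cos (2 * h) - z2 * sin (2 * h)"
      using frame2[where \<phi>=\<phi>, OF wpl Npl[of \<psi>]] unfolding z1_def z2_def \<psi> by (simp add: NN ND)
    have yN: "(y - c) \<bullet> Nv \<phi> = r" unfolding yV \<phi>_def by (rule VcN)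
    have yD: "(y - c) \<bullet> Dv \<phi> = - R * sin h" unfolding yV \<phi>_def by (rule VcD)
    have yN': "(y - c) \<bullet> Nv \<psi> = r" unfolding yV \<psi>_def by (rule VcN')
    have wy: "w \<bullet> (y - c) = R * (z1 * cos h - z2 * sin h)"
    proof -
      have "w \<bullet> (y - c) = z1 * r + z2 * (- R * sin h)"
        using frame2[OF wpl yab, of \<phi>] unfolding z1_def z2_def yN yD .
      then show ?thesis by (simp add: r_def algebra_simps)
    qed
    have nw: "norm w = sqrt (z1\<^sup>2 + z2\<^sup>2)"
      using frame2[OF wpl wpl, of \<phi>] unfolding normw z1_def z2_def by (simp add: power2_eq_square)
    from le' show "r * norm w \<le> w \<bullet> (y - c)"
    proof
      assume M: "\<exists>e>0. \<forall>u. \<bar>u - s\<bar> < e \<longrightarrow> (norm (x - q u))\<^sup>2 \<le> (norm (x - q s))\<^sup>2"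
      have z2: "z2 < 0" proof - have "(q s - x) \<bullet> Dv \<phi> < 0" using OS1(1) M by blast then show ?thesis unfolding z2_def w_def y_def by simp qed
      have zb: "z1 * sin (2 * h) + z2 * cos (2 * h) > 0" proof - have "(q s - x) \<bullet> (- Dv \<psi>) < 0" using OS2(1) M by blast then show ?thesis using wD' unfolding w_def y_def by (simp add: inner_minus_right) qed
      have "cos h * sqrt (z1\<^sup>2 + z2\<^sup>2) \<le> z1 * cos h - z2 * sin h"
        by (rule real_max_case) (use hpos z2 zb in auto)
      then have "R * (cos h * sqrt (z1\<^sup>2 + z2\<^sup>2)) \<le> R * (z1 * cos h - z2 * sin h)" using Rpos by (intro mult_left_mono) auto
      then show ?thesis unfolding wy nw r_def by (simp add: mult.assoc)
    next
      assume M: "\<exists>e>0. \<forall>u. \<bar>u - s\<bar> < e \<longrightarrow> (norm (x - q s))\<^sup>2 \<le> (norm (x - q u))\<^sup>2"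
      have z2: "z2 \<ge> 0" proof - have "(q s - x) \<bullet> Dv \<phi> \<ge> 0" using OS1(2) M by blast then show ?thesis unfolding z2_def w_def y_def by simp qed
      have zb: "z1 * sin (2 * h) + z2 * cos (2 * h) \<le> 0" proof - have "(q s - x) \<bullet> (- Dv \<psi>) \<ge> 0" using OS2(2) M by blast then show ?thesis using wD' unfolding w_def y_def by (simp add: inner_minus_right) qed
      have z1: "z1 \<ge> 0"
      proof -
        have "z1 = (y - c) \<bullet> Nv \<phi> - (x - c) \<bullet> Nv \<phi>" unfolding z1_def wyx inner_diff_left ..
        then show ?thesis using yN convx[of k] unfolding \<phi>_def by linarith
      qed
      have z3: "z1 * cos (2 * h) - z2 * sin (2 * h) \<ge> 0"
      proof -
        have "w \<bullet> Nv \<psi> = (y - c) \<bullet> Nv \<psi> - (x - c) \<bullet> Nv \<psi>" unfolding wyx inner_diff_left ..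
        then show ?thesis using yN' convx[of "k - 1"] wN' unfolding \<psi>_def by linarith
      qed
      have S0: "sin (2 * h) > 0" using hpos by (intro sin_gt_zero) auto
      have "z1 = 0 \<and> z2 = 0" by (rule real_min_case[OF S0 z2 zb z1 z3])
      then have "norm w = 0" unfolding nw by simp
      then show ?thesis using wne by simp
    qed
  qed
qed

lemma dcsd_ge: "ereal (2 * r) \<le> dcsd q"
  unfolding dcsd_def
proof (rule INF_greatest)
  fix xy assume "xy \<in> dcrit q"
  then obtain t s where xy: "xy = (q t, q s)" and ne: "q t \<noteq> q s"
    and l1: "local_extremum (\<lambda>u. (norm (q t - q u))\<^sup>2) s"
    and l2: "local_extremum (\<lambda>v. (norm (q v - q s))\<^sup>2) t"
    unfolding dcrit_def by blast
  have l2': "local_extremum (\<lambda>u. (norm (q s - q u))\<^sup>2) t"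
    using l2 by (simp add: norm_minus_commute)
  have ne': "q s \<noteq> q t" using ne by simp
  define w where "w = q s - q t"
  have h1: "r * norm w \<le> w \<bullet> (q s - c)" using half[OF ne l1] by (simp add: w_def)
  have h2: "r * norm w \<le> (- w) \<bullet> (q t - c)" using half[OF ne' l2'] by (simp add: w_def norm_minus_commute)
  have sum: "w \<bullet> (q s - c) + (- w) \<bullet> (q t - c) = w \<bullet> w"
  proof -
    have "w \<bullet> (q s - c) + (- w) \<bullet> (q t - c) = w \<bullet> ((q s - c) - (q t - c))"
      by (simp add: inner_diff_right)
    also have "(q s - c) - (q t - c) = w" by (simp add: w_def)
    finally show ?thesis .
  qed
  have "2 * r * norm w \<le> norm w * norm w" using h1 h2 sum by (simp add: dot_square_norm power2_eq_square)
  moreover have "norm w > 0" using ne' by (simp add: w_def)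
  ultimately have "2 * r \<le> norm w" by (simp add: mult.commute)
  then show "ereal (2 * r) \<le> ereal (norm (fst xy - snd xy))" using xy by (simp add: w_def norm_minus_commute)
qed

lemma shift:
  assumes ps': "poly_shift n q t1"
  shows "\<exists>j. \<forall>k. q (t1 + of_int k / real n) = V (k + j)"
proof -
  define j where "j = \<lfloor>real n * (t1 - t0)\<rfloor>"
  define \<sigma> where "\<sigma> = real n * (t1 - t0) - of_int j"
  have \<sigma>: "0 \<le> \<sigma>" "\<sigma> < 1" unfolding \<sigma>_def j_def by linarith+
  have t1: "t1 = t0 + (of_int j + \<sigma>) / real n" using n0 by (simp add: \<sigma>_def field_simps)
  show ?thesis
  proof (cases "\<sigma> = 0")
    case True
    have "q (t1 + of_int k / real n) = V (k + j)" for k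
    proof -
      have "t1 + of_int k / real n = t0 + of_int (k + j) / real n" using True t1 n0 by (simp add: field_simps)
      then show ?thesis by (simp add: V_def)
    qed
    then show ?thesis by blast
  next
    case False
    then have s0: "\<sigma> > 0" using \<sigma> by simp
    define P where "P = q (t1 + of_int (- j) / real n)"
    define Q where "Q = q (t1 + (of_int (- j) + 1) / real n)"
    have aff: "q (t1 + (of_int (- j) + s) / real n) = (1 - s) *\<^sub>R P + s *\<^sub>R Q" if "s \<in> {0..1}" for s
      unfolding P_def Q_def
      by (rule ps'[unfolded poly_shift_def, THEN spec[of _ "- j"], THEN conjunct2, THEN bspec, OF that])
    have tt: "t1 + (of_int (- j) + s) / real n = t0 + (of_int 0 + (\<sigma> + s)) / real n" for s
      using t1 n0 by (simp add: field_simps)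
    have P: "P = V 0 + (\<sigma> / real n) *\<^sub>R Dv (ang 0)"
      using aff[of 0] tt[of 0] affine_pt[of \<sigma> 0] \<sigma> by simp
    have Q: "Q = V 1 + (\<sigma> / real n) *\<^sub>R Dv (ang 1)"
    proof -
      have "t0 + (of_int 0 + (\<sigma> + 1)) / real n = t0 + (of_int 1 + \<sigma>) / real n" by (simp add: add.commute)
      then show ?thesis using aff[of 1] tt[of 1] affine_pt[of \<sigma> 1] \<sigma> by (simp add: add.commute)
    qed
    have M: "V 1 = \<sigma> *\<^sub>R P + (1 - \<sigma>) *\<^sub>R Q"
    proof -
      have "q (t1 + (of_int (- j) + (1 - \<sigma>)) / real n) = \<sigma> *\<^sub>R P + (1 - \<sigma>) *\<^sub>R Q" using aff[of "1 - \<sigma>"] \<sigma> by simp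
      moreover have "t1 + (of_int (- j) + (1 - \<sigma>)) / real n = t0 + of_int 1 / real n" using tt[of "1 - \<sigma>"] by simp
      ultimately show ?thesis by (simp add: V_def)
    qed
    have E: "V 1 = V 0 + (1 / real n) *\<^sub>R Dv (ang 0)" using edge[of 0] by (simp add: algebra_simps)
    define D0 where "D0 = Dv (ang 0)"
    define D1 where "D1 = Dv (ang 1)"
    have "(\<sigma> * (1 - \<sigma>) / real n) *\<^sub>R (D1 - D0) = \<sigma> *\<^sub>R P + (1 - \<sigma>) *\<^sub>R Q - V 1"
    proof -
      have P': "P = V 0 + (\<sigma> * (1 / real n)) *\<^sub>R D0" unfolding P D0_def by simp
      have Q': "Q = (V 0 + (1 / real n) *\<^sub>R D0) + (\<sigma> * (1 / real n)) *\<^sub>R D1" unfolding Q E D0_def D1_def by simp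
      show ?thesis unfolding P' Q' E D0_def[symmetric] lin4 by simp
    qed
    then have "(\<sigma> * (1 - \<sigma>) / real n) *\<^sub>R (D1 - D0) = 0" using M by simp
    moreover have "\<sigma> * (1 - \<sigma>) / real n \<noteq> 0" using s0 \<sigma> n0 by simp
    ultimately have "D1 = D0" by simp
    then have "D0 \<bullet> D1 = 1" using normD[of "ang 0"] by (simp add: D0_def norm_eq_1)
    moreover have "D0 \<bullet> D1 = cos (2 * h)"
    proof -
      have "ang 0 - ang 1 = - (2 * h)" using ang_prev[of 1] by simp
      then show ?thesis unfolding D0_def D1_def DD by simp
    qed
    moreover have "cos (2 * h) < 1"
    proof -
      have "cos (2 * h) < cos 0" using hpos by (intro cos_monotone_0_pi) auto
      then show ?thesis by simp
    qed
    ultimately show ?thesis by simp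
  qed
qed

end


context regp begin

lemma vert_V: "\<exists>j. \<forall>k. vert n q k = V (k + j)"
proof -
  have "poly_shift n q (SOME t. poly_shift n q t)" using ps by (rule someI)
  from shift[OF this] show ?thesis unfolding vert_def by blast
qed

lemma V_inj:
  assumes "V a = V b" "\<bar>a - b\<bar> < int n"
  shows "a = b"
proof -
  have "R *\<^sub>R Nv (ang a - h) = R *\<^sub>R Nv (ang b - h)" using assms(1) unfolding V_eq by simp
  then have NE: "Nv (ang a - h) = Nv (ang b - h)" using Rpos by simp
  have "cos ((ang a - h) - (ang b - h)) = 1" using NN[of "ang a - h" "ang b - h"] NE NN[of "ang b - h" "ang b - h"] by simp
  then obtain m :: int where m: "(ang a - h) - (ang b - h) = of_int m * 2 * pi" by (auto simp: cos_one_2pi_int)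
  have "(ang a - h) - (ang b - h) = 2 * pi * real_of_int (a - b) / real n"
  proof -
    have "2 * pi * real_of_int (a - b) / real n = 2 * pi * real_of_int a / real n - 2 * pi * real_of_int b / real n"
      by (simp add: diff_divide_distrib right_diff_distrib)
    then show ?thesis unfolding ang_def by simp
  qed
  with m have e: "2 * pi * real_of_int (a - b) / real n = real_of_int m * 2 * pi" by simp
  have "2 * pi * real_of_int (a - b) = 2 * pi * (real_of_int m * real n)"
    using e n0 by (simp add: field_simps)
  then have "real_of_int (a - b) = real_of_int m * real n" by simp
  then have ab: "a - b = m * int n" by (metis of_int_eq_iff of_int_mult of_int_of_nat_eq)
  show ?thesis
  proof (cases "m = 0")
    case True then show ?thesis using ab by simp
  next
    case False
    then have m1: "1 \<le> \<bar>m\<bar>" by linarith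
    have "\<bar>m * int n\<bar> = \<bar>m\<bar> * int n" by (simp add: abs_mult)
    also have "\<dots> \<ge> 1 * int n" using m1 by (intro mult_right_mono) auto
    finally have "\<bar>m * int n\<bar> \<ge> int n" by simp
    then show ?thesis using ab assms(2) by simp
  qed
qed

lemma kappa_reg:
  "kappa_d (vert n q (i - 1)) (vert n q i) (vert n q (i + 1)) = ereal (2 * real n * tan (pi / real n))"
proof -
  obtain j where j: "\<And>k. vert n q k = V (k + j)" using vert_V by blast
  define m where "m = i + j"
  have d1: "vert n q i - vert n q (i - 1) = (1 / real n) *\<^sub>R Dv (ang (m - 1))"
    using edge[of "m - 1"] j[of i] j[of "i - 1"] by (simp add: m_def algebra_simps)
  have d2: "vert n q (i + 1) - vert n q i = (1 / real n) *\<^sub>R Dv (ang m)"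
    using edge[of m] j[of i] j[of "i + 1"] by (simp add: m_def algebra_simps)
  have nn: "0 < n" using n3 by simp
  have a1: "norm (vert n q i - vert n q (i - 1)) = 1 / real n" unfolding d1 using normD n0 by simp
  have a2: "norm (vert n q (i + 1) - vert n q i) = 1 / real n" unfolding d2 using normD n0 by simp
  have va: "vec_angle (vert n q i - vert n q (i - 1)) (vert n q (i + 1) - vert n q i) = 2 * h"
  proof -
    have "vec_angle (vert n q i - vert n q (i - 1)) (vert n q (i + 1) - vert n q i) = arccos (Dv (ang (m - 1)) \<bullet> Dv (ang m))"
      unfolding d1 d2 by (rule vec_angle_scale[OF normD normD]) (use n0 in simp)
    also have "Dv (ang (m - 1)) \<bullet> Dv (ang m) = cos (2 * h)" unfolding DD ang_prev by simp
    also have "arccos (cos (2 * h)) = 2 * h" using hpos by (intro arccos_cos) auto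
    finally show ?thesis .
  qed
  have "2 * h \<noteq> pi" using hpos by simp
  then show ?thesis
    unfolding kappa_char[where n=n and x="vert n q (i - 1)" and y="vert n q i" and z="vert n q (i + 1)", OF nn a1 a2] Let_def va
    by (simp add: h_def)
qed

lemma inj_reg: "inj_on (vert n q) {1..int n}"
proof (rule inj_onI)
  obtain j where j: "\<And>k. vert n q k = V (k + j)" using vert_V by blast
  fix a b assume ab: "a \<in> {1..int n}" "b \<in> {1..int n}" "vert n q a = vert n q b"
  have "a + j = b + j" using ab by (intro V_inj) (auto simp: j)
  then show "a = b" by simp
qed

lemma maxCurv_reg: "maxCurv n q = ereal (2 * real n * tan (pi / real n))"
proof -
  have "(\<lambda>i. kappa_d (vert n q (i - 1)) (vert n q i) (vert n q (i + 1))) ` {1..int n} = {ereal (2 * real n * tan (pi / real n))}"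
  proof -
    have ne: "{1..int n} \<noteq> {}" using n3 by simp
    show ?thesis using ne by (simp add: kappa_reg image_constant_conv)
  qed
  then show ?thesis unfolding maxCurv_def by simp
qed

lemma Delta_reg: "Delta n q = ereal r"
proof -
  have T: "2 * real n * tan (pi / real n) \<noteq> 0" using rpos r_eq n0 by auto
  have mr: "minRad n q = ereal r" unfolding minRad_def maxCurv_reg using T r_eq by (simp add: inverse_eq_divide)
  have "ereal r \<le> dcsd q / 2"
    using dcsd_ge by (subst ereal_le_divide_pos) auto
  then show ?thesis unfolding Delta_def using inj_reg mr by (simp add: min_def)
qed

end


lemma reg_Delta:
  assumes n: "n \<ge> 3" and rg: "regular_ngon n (q :: real \<Rightarrow> 'a::euclidean_space)"
  shows "Delta n q = ereal (1 / (2 * real n * tan (pi / real n))) \<and> inj_on (vert n q) {1..int n}"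
proof -
  obtain t0 c e1 e2 where H: "poly_shift n q t0" "norm e1 = 1" "norm e2 = 1" "e1 \<bullet> e2 = 0"
    "\<forall>k::int. q (t0 + of_int k / real n) = c + (1 / (2 * real n * sin (pi / real n))) *\<^sub>R
           (cos (2 * pi * of_int k / real n) *\<^sub>R e1 + sin (2 * pi * of_int k / real n) *\<^sub>R e2)"
    using rg unfolding regular_ngon_def by blast
  interpret regp n q t0 c e1 e2
    using n H by unfold_locales auto
  show ?thesis using Delta_reg inj_reg r_eq by simp
qed

lemma dcsd_nonneg: "0 \<le> dcsd p"
  unfolding dcsd_def by (rule INF_greatest) simp

lemma ereal_inv_inv:
  fixes x :: ereal
  assumes "0 \<le> x"
  shows "inverse (inverse x) = x"
  using assms by (cases x) auto

theorem proposition5: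
  fixes p g :: "real \<Rightarrow> 'a::euclidean_space" and n :: nat
  assumes "DIM('a) \<ge> 2"
    and "n \<ge> 3"
    and "p \<in> Pn n"
    and "regular_ngon n g"
  shows "Delta_inv n g \<le> Delta_inv n p \<and> (Delta_inv n g = Delta_inv n p \<longleftrightarrow> regular_ngon n p)"
proof -
  have n: "n \<ge> 3" and p: "p \<in> Pn n" and g: "regular_ngon n g" using assms by auto
  define T where "T = 2 * real n * tan (pi / real n)"
  have n0: "real n > 0" using n by simp
  have tpos: "tan (pi / real n) > 0" using n by (intro tan_gt_zero) (auto simp: field_simps)
  have Tpos: "T > 0" using n0 tpos by (simp add: T_def)
  have rho: "1 / (2 * real n * tan (pi / real n)) = 1 / T" by (simp add: T_def)
  have Dg: "Delta n g = ereal (1 / T)" using reg_Delta[OF n g] rho by simp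
  have iT: "inverse (ereal (1 / T)) = ereal T" using Tpos by simp
  have Dig: "Delta_inv n g = ereal T" unfolding Delta_inv_def Dg iT ..
  have mc: "ereal T \<le> maxCurv n p" unfolding T_def by (rule maxCurv_ge[OF p n])
  have mr: "minRad n p \<le> ereal (1 / T)"
  proof -
    have "inverse (maxCurv n p) \<le> inverse (ereal T)" using mc Tpos by (intro ereal_inverse_antimono) auto
    then show ?thesis unfolding minRad_def using Tpos by (simp add: inverse_eq_divide)
  qed
  have mr0: "0 \<le> minRad n p" unfolding minRad_def using mc Tpos by (intro inverse_ereal_ge0I) (meson ereal_less_eq(5) less_imp_le order_trans)
  show ?thesis
  proof (cases "inj_on (vert n p) {1..int n}")
    case False
    have "Delta_inv n p = \<infinity>" unfolding Delta_inv_def Delta_def using False by simp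
    moreover have "\<not> regular_ngon n p" using reg_Delta[OF n] False by blast
    ultimately show ?thesis using Dig by simp
  next
    case True
    have DP: "Delta n p = min (minRad n p) (dcsd p / 2)" unfolding Delta_def using True by simp
    have d2: "0 \<le> dcsd p / 2" using dcsd_nonneg[of p] by (subst ereal_le_divide_pos) auto
    have D0: "0 \<le> Delta n p" unfolding DP using mr0 d2 by simp
    have Dle: "Delta n p \<le> ereal (1 / T)" unfolding DP using mr by (simp add: min.coboundedI1)
    have le: "ereal T \<le> Delta_inv n p"
      unfolding Delta_inv_def iT[symmetric] by (rule ereal_inverse_antimono[OF D0 Dle])
    have eqv: "Delta_inv n g = Delta_inv n p \<longleftrightarrow> regular_ngon n p"
    proof
      assume eq: "Delta_inv n g = Delta_inv n p"
      then have "inverse (Delta n p) = ereal T" using Dig unfolding Delta_inv_def by simp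
      then have "Delta n p = inverse (ereal T)" using ereal_inv_inv[OF D0] by metis
      then have Dp: "Delta n p = ereal (1 / T)" using Tpos by (simp add: inverse_eq_divide)
      have "ereal (1 / T) \<le> minRad n p" using Dp unfolding DP by (metis min.cobounded1)
      then have "ereal (1 / T) \<le> inverse (maxCurv n p)" unfolding minRad_def .
      then have "maxCurv n p \<le> ereal T"
      proof (cases "maxCurv n p")
        case (real m)
        have m0: "m > 0" using mc real Tpos by simp
        then have "1 / T \<le> 1 / m" using \<open>ereal (1 / T) \<le> inverse (maxCurv n p)\<close> real by (simp add: inverse_eq_divide)
        then have "m \<le> T" using m0 Tpos by (simp add: divide_le_cancel frac_le_eq field_simps)
        then show ?thesis using real by simp
      next
        case PInf
        then show ?thesis using \<open>ereal (1 / T) \<le> inverse (maxCurv n p)\<close> Tpos by simp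
      next
        case MInf
        then show ?thesis using mc by simp
      qed
      then show "regular_ngon n p" using maxCurv_le_regular[OF p n] unfolding T_def by simp
    next
      assume rp: "regular_ngon n p"
      have "Delta n p = ereal (1 / T)" using reg_Delta[OF n rp] rho by simp
      then show "Delta_inv n g = Delta_inv n p" unfolding Delta_inv_def Dg by simp
    qed
    show ?thesis using le eqv Dig by simp
  qed
qed


end
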